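(* Suppose $C\in\mathcal{C}^3_{\rm c}$ is not simplified. Then there exists a simplified copula $D\in\mathcal{C}^3_{\rm S}$ with $d_\infty(C,D)<d_\infty(C,\psi(C))$.
   Context: $\mathbb{I}=[0,1]$, $\lambda$ Lebesgue measure; $d_\infty(C_1,C_2)=\max_{\mathbf{x}\in\mathbb{I}^3}|C_1(\mathbf{x})-C_2(\mathbf{x})|$. Points of $\mathbb{I}^3$ are written $(\mathbf{u},v)$, $\mathbf{u}=(u_1,u_2)$. For a three-dimensional copula $C$, $K_C$ is (a version of) the regular conditional distribution of $(U_1,U_2)$ given $U_3=v$, $(U_1,U_2,U_3)\sim C$; $F_{1|3}(u_1|t)=K_C(t,[0,u_1]\times\mathbb{I})$, $F_{2|3}(u_2|t)=K_C(t,\mathbb{I}\times[0,u_2])$. By Sklar's theorem, for $\lambda$-a.e. $t$ there is a bivariate copula $C^t_{12;3}$ with $K_C(t,[\mathbf{0},\mathbf{u}])=C^t_{12;3}(F_{1|3}(u_1|t),F_{2|3}(u_2|t))$ for all $\mathbf{u}$. $\mathcal{C}^3_{\rm c}$ is the set of three-dimensional copulas for which $F_{1|3}(\cdot|t)$ and $F_{2|3}(\cdot|t)$ are continuous for $\lambda$-a.e. $t$ (then $C^t_{12;3}$ is unique for a.e. $t$). $C$ is simplified if $C\in\mathcal{C}^3_{\rm c}$ and there is a bivariate copula $A$ with $C(\mathbf{u},v)=\int_{[0,v]}A(F_{1|3}(u_1|t),F_{2|3}(u_2|t))\,d\lambda(t)$ for all $(\mathbf{u},v)$; $\mathcal{C}^3_{\rm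 S}$ is the set of simplified copulas. For $C\in\mathcal{C}^3_{\rm c}$, the partial copula is $C_p(\mathbf{s})=\int_{\mathbb{I}}C^t_{12;3}(\mathbf{s})\,d\lambda(t)$ and the partial vine copula is $\psi(C)(\mathbf{u},v)=\int_{[0,v]}C_p(F_{1|3}(u_1|t),F_{2|3}(u_2|t))\,d\lambda(t)$. *)

theory Defs
  imports "HOL-Probability.Probability"
begin

definition copula2 :: "(real \<Rightarrow> real \<Rightarrow> real) \<Rightarrow> bool" where
  "copula2 A \<longleftrightarrow>
     (\<forall>u\<in>{0..1}. A u 0 = 0 \<and> A 0 u = 0 \<and> A u 1 = u \<and> A 1 u = u) \<and>
     (\<forall>u1\<in>{0..1}. \<forall>u2\<in>{0..1}. \<forall>v1\<in>{0..1}. \<forall>v2\<in>{0..1}.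
        u1 \<le> u2 \<longrightarrow> v1 \<le> v2 \<longrightarrow> A u2 v2 - A u1 v2 - A u2 v1 + A u1 v1 \<ge> 0)"

definition copula3 :: "(real \<Rightarrow> real \<Rightarrow> real \<Rightarrow> real) \<Rightarrow> bool" where
  "copula3 C \<longleftrightarrow>
     (\<forall>x\<in>{0..1}. \<forall>y\<in>{0..1}. C 0 x y = 0 \<and> C x 0 y = 0 \<and> C x y 0 = 0) \<and>
     (\<forall>x\<in>{0..1}. C x 1 1 = x \<and> C 1 x 1 = x \<and> C 1 1 x = x) \<and>
     (\<forall>a1\<in>{0..1}. \<forall>b1\<in>{0..1}. \<forall>a2\<in>{0..1}. \<forall>b2\<in>{0..1}. \<forall>a3\<in>{0..1}. \<forall>b3\<in>{0..1}.
        a1 \<le> b1 \<longrightarrow> a2 \<le> b2 \<longrightarrow> a3 \<le> b3 \<longrightarrow>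
        C b1 b2 b3 - C a1 b2 b3 - C b1 a2 b3 - C b1 b2 a3
          + C a1 a2 b3 + C a1 b2 a3 + C b1 a2 a3 - C a1 a2 a3 \<ge> 0)"

text \<open>K is a version of the regular conditional distribution of (U1,U2) given U3 = t:
  a Markov kernel from [0,1] to [0,1]^2 with
  C(u1,u2,v) = \<integral>_[0,v] K(t,[0,u1]\<times>[0,u2]) d\<lambda>(t).\<close>
definition cond_kernel :: "(real \<Rightarrow> real \<Rightarrow> real \<Rightarrow> real) \<Rightarrow> (real \<Rightarrow> (real \<times> real) measure) \<Rightarrow> bool" where
  "cond_kernel C K \<longleftrightarrow>
     K \<in> measurable (restrict_space borel {0..1}) (subprob_algebra borel) \<and>
     (\<forall>t\<in>{0..1}. prob_space (K t) \<and> emeasure (K t) ({0..1} \<times> {0..1}) = 1) \<and>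
     (\<forall>u1\<in>{0..1}. \<forall>u2\<in>{0..1}. \<forall>v\<in>{0..1}.
        C u1 u2 v = (LINT t:{0..v}|lborel. measure (K t) ({0..u1} \<times> {0..u2})))"

definition F13 :: "(real \<Rightarrow> (real \<times> real) measure) \<Rightarrow> real \<Rightarrow> real \<Rightarrow> real" where
  "F13 K t u1 = measure (K t) ({0..u1} \<times> {0..1})"

definition F23 :: "(real \<Rightarrow> (real \<times> real) measure) \<Rightarrow> real \<Rightarrow> real \<Rightarrow> real" where
  "F23 K t u2 = measure (K t) ({0..1} \<times> {0..u2})"

text \<open>Continuity of the conditional marginals for a.e. t (membership in C^3_c, given a version K).\<close>
definition cont_margins :: "(real \<Rightarrow> (real \<times> real) measure) \<Rightarrow> bool" where
  "cont_margins K \<longleftrightarrow>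
     (AE t in lborel. t \<in> {0..1} \<longrightarrow>
        continuous_on {0..1} (F13 K t) \<and> continuous_on {0..1} (F23 K t))"

definition in_Cc :: "(real \<Rightarrow> real \<Rightarrow> real \<Rightarrow> real) \<Rightarrow> bool" where
  "in_Cc C \<longleftrightarrow> copula3 C \<and> (\<exists>K. cond_kernel C K \<and> cont_margins K)"

text \<open>Conditional copula C^t_{12;3} (Sklar); unique for a.e. t when C is in C^3_c.\<close>
definition cond_copula :: "(real \<Rightarrow> (real \<times> real) measure) \<Rightarrow> real \<Rightarrow> real \<Rightarrow> real \<Rightarrow> real" where
  "cond_copula K t = (SOME A. copula2 A \<and>
      (\<forall>u1\<in>{0..1}. \<forall>u2\<in>{0..1}.
         measure (K t) ({0..u1} \<times> {0..u2}) = A (F13 K t u1) (F23 K t u2)))"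

definition partial_copula :: "(real \<Rightarrow> (real \<times> real) measure) \<Rightarrow> real \<Rightarrow> real \<Rightarrow> real" where
  "partial_copula K s1 s2 = (LINT t:{0..1}|lebesgue. cond_copula K t s1 s2)"

definition pvc :: "(real \<Rightarrow> (real \<times> real) measure) \<Rightarrow> real \<Rightarrow> real \<Rightarrow> real \<Rightarrow> real" where
  "pvc K u1 u2 v = (LINT t:{0..v}|lebesgue. partial_copula K (F13 K t u1) (F23 K t u2))"

definition simplified :: "(real \<Rightarrow> real \<Rightarrow> real \<Rightarrow> real) \<Rightarrow> bool" where
  "simplified C \<longleftrightarrow> copula3 C \<and>
     (\<exists>K. cond_kernel C K \<and> cont_margins K \<and>
        (\<exists>A. copula2 A \<and>
           (\<forall>u1\<in>{0..1}. \<forall>u2\<in>{0..1}. \<forall>v\<in>{0..1}.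
              C u1 u2 v = (LINT t:{0..v}|lebesgue. A (F13 K t u1) (F23 K t u2)))))"

definition d_inf :: "(real \<Rightarrow> real \<Rightarrow> real \<Rightarrow> real) \<Rightarrow> (real \<Rightarrow> real \<Rightarrow> real \<Rightarrow> real) \<Rightarrow> real" where
  "d_inf C D = (SUP x\<in>{0..1} \<times> {0..1} \<times> {0..1}. \<bar>C (fst x) (fst (snd x)) (snd (snd x))
                                              - D (fst x) (fst (snd x)) (snd (snd x))\<bar>)"

end

theory Submission
  imports Defs
begin

lemma c3D:
  assumes "copula3 C"
  shows c3_g1: "\<And>x y. x\<in>{0..1} \<Longrightarrow> y\<in>{0..1} \<Longrightarrow> C 0 x y = 0"
    and c3_g2: "\<And>x y. x\<in>{0..1} \<Longrightarrow> y\<in>{0..1} \<Longrightarrow> C x 0 y = 0"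
    and c3_g3: "\<And>x y. x\<in>{0..1} \<Longrightarrow> y\<in>{0..1} \<Longrightarrow> C x y 0 = 0"
    and c3_m1: "\<And>x. x\<in>{0..1} \<Longrightarrow> C x 1 1 = x"
    and c3_m2: "\<And>x. x\<in>{0..1} \<Longrightarrow> C 1 x 1 = x"
    and c3_m3: "\<And>x. x\<in>{0..1} \<Longrightarrow> C 1 1 x = x"
    and c3_inc: "\<And>a1 b1 a2 b2 a3 b3. a1\<in>{0..1} \<Longrightarrow> b1\<in>{0..1} \<Longrightarrow> a2\<in>{0..1} \<Longrightarrow> b2\<in>{0..1}
       \<Longrightarrow> a3\<in>{0..1} \<Longrightarrow> b3\<in>{0..1} \<Longrightarrow> a1 \<le> b1 \<Longrightarrow> a2 \<le> b2 \<Longrightarrow> a3 \<le> b3 \<Longrightarrow>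
        C b1 b2 b3 - C a1 b2 b3 - C b1 a2 b3 - C b1 b2 a3
          + C a1 a2 b3 + C a1 b2 a3 + C b1 a2 a3 - C a1 a2 a3 \<ge> 0"
  using assms unfolding copula3_def by blast+

lemma c3_lip1:
  assumes c: "copula3 C" and r: "x\<in>{0..1}" "x'\<in>{0..1}" "y\<in>{0..1}" "z\<in>{0..1}" and le: "x \<le> x'"
  shows "0 \<le> C x' y z - C x y z \<and> C x' y z - C x y z \<le> x' - x"
proof -
  have z: "(0::real)\<in>{0..1}" "(1::real)\<in>{0..1}" by auto
  note g = c3_g1[OF c] c3_g2[OF c] c3_g3[OF c]
  note m = c3_m1[OF c] c3_m2[OF c] c3_m3[OF c]
  have 1: "0 \<le> C x' y z - C x y z"
    using c3_inc[OF c r(1,2) z(1) r(3) z(1) r(4) le] r z by (simp add: g)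
  have 2: "C x' y z - C x y z \<le> C x' 1 z - C x 1 z"
    using c3_inc[OF c r(1,2) r(3) z(2) z(1) r(4) le] r z by (simp add: g)
  have 3: "C x' 1 z - C x 1 z \<le> C x' 1 1 - C x 1 1"
    using c3_inc[OF c r(1,2) z(1) z(2) r(4) z(2) le] r z by (simp add: g)
  show ?thesis using 1 2 3 m r by simp
qed

lemma c3_lip2:
  assumes c: "copula3 C" and r: "x\<in>{0..1}" "y\<in>{0..1}" "y'\<in>{0..1}" "z\<in>{0..1}" and le: "y \<le> y'"
  shows "0 \<le> C x y' z - C x y z \<and> C x y' z - C x y z \<le> y' - y"
proof -
  have z: "(0::real)\<in>{0..1}" "(1::real)\<in>{0..1}" by auto
  note g = c3_g1[OF c] c3_g2[OF c] c3_g3[OF c]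
  note m = c3_m1[OF c] c3_m2[OF c] c3_m3[OF c]
  have 1: "0 \<le> C x y' z - C x y z"
    using c3_inc[OF c z(1) r(1) r(2,3) z(1) r(4) _ le] r z by (simp add: g)
  have 2: "C x y' z - C x y z \<le> C 1 y' z - C 1 y z"
    using c3_inc[OF c r(1) z(2) r(2,3) z(1) r(4) _ le] r z by (simp add: g)
  have 3: "C 1 y' z - C 1 y z \<le> C 1 y' 1 - C 1 y 1"
    using c3_inc[OF c z(1) z(2) r(2,3) r(4) z(2) _ le] r z by (simp add: g)
  show ?thesis using 1 2 3 m r by simp
qed

lemma c3_lip3:
  assumes c: "copula3 C" and r: "x\<in>{0..1}" "y\<in>{0..1}" "z\<in>{0..1}" "z'\<in>{0..1}" and le: "z \<le> z'"
  shows "0 \<le> C x y z' - C x y z \<and> C x y z' - C x y z \<le> z' - z"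
proof -
  have z: "(0::real)\<in>{0..1}" "(1::real)\<in>{0..1}" by auto
  note g = c3_g1[OF c] c3_g2[OF c] c3_g3[OF c]
  note m = c3_m1[OF c] c3_m2[OF c] c3_m3[OF c]
  have 1: "0 \<le> C x y z' - C x y z"
    using c3_inc[OF c z(1) r(1) z(1) r(2) r(3,4) _ _ le] r z by (simp add: g)
  have 2: "C x y z' - C x y z \<le> C 1 y z' - C 1 y z"
    using c3_inc[OF c r(1) z(2) z(1) r(2) r(3,4) _ _ le] r z by (simp add: g)
  have 3: "C 1 y z' - C 1 y z \<le> C 1 1 z' - C 1 1 z"
    using c3_inc[OF c z(1) z(2) r(2) z(2) r(3,4) _ _ le] r z by (simp add: g)
  show ?thesis using 1 2 3 m r by simp
qed

lemma c3_lip: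
  assumes c: "copula3 C" and r: "x\<in>{0..1}" "y\<in>{0..1}" "z\<in>{0..1}" "x'\<in>{0..1}" "y'\<in>{0..1}" "z'\<in>{0..1}"
  shows "\<bar>C x y z - C x' y' z'\<bar> \<le> \<bar>x - x'\<bar> + \<bar>y - y'\<bar> + \<bar>z - z'\<bar>"
proof -
  have a: "\<bar>C x y z - C x' y z\<bar> \<le> \<bar>x - x'\<bar>"
    using c3_lip1[OF c r(1) r(4) r(2,3)] c3_lip1[OF c r(4) r(1) r(2,3)] by (cases "x \<le> x'") auto
  have b: "\<bar>C x' y z - C x' y' z\<bar> \<le> \<bar>y - y'\<bar>"
    using c3_lip2[OF c r(4) r(2) r(5) r(3)] c3_lip2[OF c r(4) r(5) r(2) r(3)] by (cases "y \<le> y'") auto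
  have d: "\<bar>C x' y' z - C x' y' z'\<bar> \<le> \<bar>z - z'\<bar>"
    using c3_lip3[OF c r(4) r(5) r(3) r(6)] c3_lip3[OF c r(4) r(5) r(6) r(3)] by (cases "z \<le> z'") auto
  show ?thesis using a b d by linarith
qed

definition vol :: "(real\<Rightarrow>real\<Rightarrow>real\<Rightarrow>real) \<Rightarrow> real\<Rightarrow>real\<Rightarrow>real\<Rightarrow>real\<Rightarrow>real\<Rightarrow>real\<Rightarrow>real" where
 "vol C a1 b1 a2 b2 a3 b3 = C b1 b2 b3 - C a1 b2 b3 - C b1 a2 b3 - C b1 b2 a3
          + C a1 a2 b3 + C a1 b2 a3 + C b1 a2 a3 - C a1 a2 a3"

lemma sv1: "(\<Sum>i<a. vol C (real i/real n) (real (Suc i)/real n) a2 b2 a3 b3) = vol C 0 (real a/real n) a2 b2 a3 b3"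
  by (induct a) (auto simp: vol_def algebra_simps)
lemma sv2: "(\<Sum>i<a. vol C a1 b1 (real i/real n) (real (Suc i)/real n) a3 b3) = vol C a1 b1 0 (real a/real n) a3 b3"
  by (induct a) (auto simp: vol_def algebra_simps)
lemma sv3: "(\<Sum>i<a. vol C a1 b1 a2 b2 (real i/real n) (real (Suc i)/real n)) = vol C a1 b1 a2 b2 0 (real a/real n)"
  by (induct a) (auto simp: vol_def algebra_simps)

definition cm :: "(real\<Rightarrow>real\<Rightarrow>real\<Rightarrow>real) \<Rightarrow> nat \<Rightarrow> nat \<Rightarrow> nat \<Rightarrow> nat \<Rightarrow> real" where
  "cm C n i j k = vol C (real i/real n) (real (Suc i)/real n) (real j/real n) (real (Suc j)/real n)
      (real k/real n) (real (Suc k)/real n)"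

lemma frac01: "i \<le> n \<Longrightarrow> real i / real n \<in> {0..1}"
  by (cases "n = 0") (auto simp: field_simps)

lemma cm_nonneg: assumes c: "copula3 C" and "i < n" "j < n" "k < n" shows "0 \<le> cm C n i j k"
  unfolding cm_def vol_def
  by (rule c3_inc[OF c]) (use assms in \<open>auto intro!: frac01 divide_right_mono\<close>)

lemma vol_grid: assumes c: "copula3 C" and "x\<in>{0..1}" "y\<in>{0..1}" "z\<in>{0..1}"
  shows "vol C 0 x 0 y 0 z = C x y z"
  using assms by (simp add: vol_def c3_g1[OF c] c3_g2[OF c] c3_g3[OF c])

lemma cm_grid: assumes c: "copula3 C" "a \<le> n" "b \<le> n" "d \<le> n"
  shows "(\<Sum>i<a. \<Sum>j<b. \<Sum>k<d. cm C n i j k) = C (real a/real n) (real b/real n) (real d/real n)"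
  unfolding cm_def sv1 sv2 sv3 using assms frac01 by (intro vol_grid) blast+

lemma sum_divmod: fixes n :: nat and f :: "nat \<Rightarrow> nat \<Rightarrow> real"
  shows "(\<Sum>p<n*n. f (p div n) (p mod n)) = (\<Sum>i<n. \<Sum>j<n. f i j)"
proof -
  have "(\<Sum>p<n*n. f (p div n) (p mod n)) = (\<Sum>(i,j)\<in>{..<n}\<times>{..<n}. f i j)"
  proof (rule sum.reindex_bij_witness[where i="\<lambda>(i,j). i*n+j" and j="\<lambda>p. (p div n, p mod n)"])
    fix p assume p: "p \<in> {..<n*n}"
    show "(case (p div n, p mod n) of (i, j) \<Rightarrow> i * n + j) = p" by simp
    show "(p div n, p mod n) \<in> {..<n}\<times>{..<n}" using p
      by (auto simp: less_mult_imp_div_less) (metis mod_less_divisor gr_zeroI mult_0_right not_less0)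
    show "(case (p div n, p mod n) of (i, j) \<Rightarrow> f i j) = f (p div n) (p mod n)" by simp
  next
    fix a assume a: "a \<in> {..<n}\<times>{..<n}"
    obtain i j where ij: "a = (i,j)" "i < n" "j < n" using a by auto
    then show "((case a of (i, j) \<Rightarrow> i * n + j) div n, (case a of (i, j) \<Rightarrow> i * n + j) mod n) = a"
      by simp
    have "i*n + j < i*n + n" using ij by simp
    also have "\<dots> = Suc i * n" by simp
    also have "\<dots> \<le> n * n" using ij by (intro mult_right_mono) auto
    finally show "(case a of (i, j) \<Rightarrow> i * n + j) \<in> {..<n*n}" using ij by simp
  qed
  also have "\<dots> = (\<Sum>i<n. \<Sum>j<n. f i j)" by (simp add: sum.cartesian_product)
  finally show ?thesis .
qed

definition "mp C n k p = cm C n (p div n) (p mod n) k"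
definition "Sc C n k p = (\<Sum>q<p. mp C n k q)"
definition "lo C n k p = real k / real n + Sc C n k p"
definition "Iv C n k p = {lo C n k p ..< lo C n k (Suc p)}"
definition "sf C n (\<phi>::nat\<Rightarrow>real) t = (\<Sum>k<n. \<Sum>p<n*n. indicator (Iv C n k p) t * \<phi> p)"

lemma p_div_lt: "p < n*n \<Longrightarrow> p div (n::nat) < n"
  by (simp add: less_mult_imp_div_less)
lemma p_mod_lt: "p < n*n \<Longrightarrow> p mod (n::nat) < n"
  by (metis mod_less_divisor gr_zeroI mult_0_right not_less0)

context
  fixes C :: "real\<Rightarrow>real\<Rightarrow>real\<Rightarrow>real" and n :: nat assumes c: "copula3 C" and n: "0 < n"
begin

lemma mp_nonneg: "k < n \<Longrightarrow> p < n*n \<Longrightarrow> 0 \<le> mp C n k p"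
  unfolding mp_def using c by (intro cm_nonneg) (auto intro: p_div_lt p_mod_lt)

lemma Sc_mono: "k < n \<Longrightarrow> q \<le> q' \<Longrightarrow> q' \<le> n*n \<Longrightarrow> Sc C n k q \<le> Sc C n k q'"
  unfolding Sc_def by (rule sum_mono2) (auto intro!: mp_nonneg)

lemma Sc_total: "k < n \<Longrightarrow> Sc C n k (n*n) = 1 / real n"
proof -
  assume k: "k < n"
  have "Sc C n k (n*n) = (\<Sum>i<n. \<Sum>j<n. cm C n i j k)"
    unfolding Sc_def mp_def by (rule sum_divmod)
  also have "\<dots> = vol C 0 1 0 1 (real k/real n) (real (Suc k)/real n)"
    unfolding cm_def sv1 sv2 using n by simp
  also have "\<dots> = 1 / real n"
    using k n frac01[of k n] frac01[of "Suc k" n]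
    by (simp add: vol_def c3_g1[OF c] c3_g2[OF c] c3_m3[OF c] diff_divide_distrib[symmetric])
  finally show ?thesis .
qed

lemma lo_sub: assumes "k < n" "p < n*n"
  shows "real k / real n \<le> lo C n k p" "lo C n k p \<le> lo C n k (Suc p)" "lo C n k (Suc p) \<le> real (Suc k) / real n"
proof -
  have "Sc C n k 0 \<le> Sc C n k p" using assms by (intro Sc_mono) auto
  then show "real k / real n \<le> lo C n k p" by (simp add: lo_def Sc_def)
  show "lo C n k p \<le> lo C n k (Suc p)" using assms by (simp add: lo_def Sc_mono)
  have "Sc C n k (Suc p) \<le> Sc C n k (n*n)" using assms by (intro Sc_mono) auto
  then show "lo C n k (Suc p) \<le> real (Suc k) / real n"
    using assms by (simp add: lo_def Sc_total add_divide_distrib)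
qed

lemma Iv_sub: "k < n \<Longrightarrow> p < n*n \<Longrightarrow> t \<in> Iv C n k p \<Longrightarrow> real k / real n \<le> t \<and> t < real (Suc k) / real n"
  using lo_sub[of k p] unfolding Iv_def by auto

lemma Iv_disj: assumes "k < n" "p < n*n" "k' < n" "p' < n*n" "(k,p) \<noteq> (k',p')"
    "t \<in> Iv C n k p" shows "t \<notin> Iv C n k' p'"
proof
  assume t': "t \<in> Iv C n k' p'"
  show False
  proof (cases "k = k'")
    case True
    then have "p \<noteq> p'" using assms by auto
    then consider "Suc p \<le> p'" | "Suc p' \<le> p" by linarith
    then show False
    proof cases
      case 1
      then have "Sc C n k (Suc p) \<le> Sc C n k p'" using assms by (intro Sc_mono) auto
      then show False using assms t' True unfolding Iv_def lo_def by auto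
    next
      case 2
      then have "Sc C n k (Suc p') \<le> Sc C n k p" using assms True by (intro Sc_mono) auto
      then show False using assms t' True unfolding Iv_def lo_def by auto
    qed
  next
    case False
    then consider "Suc k \<le> k'" | "Suc k' \<le> k" by linarith
    then show False
    proof cases
      case 1
      then have "real (Suc k) / real n \<le> real k' / real n" using n by (intro divide_right_mono) auto
      then show False using Iv_sub[of k p t] Iv_sub[of k' p' t] assms t' by auto
    next
      case 2
      then have "real (Suc k') / real n \<le> real k / real n" using n by (intro divide_right_mono) auto
      then show False using Iv_sub[of k p t] Iv_sub[of k' p' t] assms t' by auto
    qed
  qed
qed

end

lemma step_find: "(f::nat\<Rightarrow>real) 0 \<le> \<tau> \<Longrightarrow> \<tau> < f N \<Longrightarrow> \<exists>p<N. f p \<le> \<tau> \<and> \<tau> < f (Suc p)"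
proof (induct N)
  case 0 then show ?case by simp
next
  case (Suc N)
  show ?case
  proof (cases "\<tau> < f N")
    case True then show ?thesis using Suc by (metis less_SucI)
  next
    case False then show ?thesis using Suc by (intro exI[of _ N]) auto
  qed
qed

lemma integrable_Ico: "integrable lborel (indicator {a..<b::real} :: real \<Rightarrow> real)"
proof (rule integrable_real_indicator)
  have "emeasure lborel {a..<b} \<le> emeasure lborel {a..b}" by (intro emeasure_mono) auto
  also have "\<dots> < \<infinity>" by (simp add: emeasure_lborel_Icc_eq)
  finally show "emeasure lborel {a..<b} < \<infinity>" .
qed auto

context
  fixes C :: "real\<Rightarrow>real\<Rightarrow>real\<Rightarrow>real" and n :: nat assumes c: "copula3 C" and n: "0 < n"
begin

lemma Iv_cover: assumes "0 \<le> t" "t < 1" shows "\<exists>k<n. \<exists>p<n*n. t \<in> Iv C n k p"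
proof -
  define k where "k = nat \<lfloor>t * real n\<rfloor>"
  have fl: "real k \<le> t * real n" "t * real n < real k + 1"
    using assms unfolding k_def by (simp_all add: of_nat_nat)
  have "t * real n < real n" using assms n by simp
  then have kn: "k < n" using fl by linarith
  have 1: "real k / real n \<le> t" using fl n by (simp add: field_simps)
  have 2: "t < real k / real n + 1 / real n" using fl n by (simp add: field_simps)
  have "lo C n k 0 \<le> t" using 1 by (simp add: lo_def Sc_def)
  moreover have "t < lo C n k (n*n)" using 2 by (simp add: lo_def Sc_total[OF c n kn])
  ultimately obtain p where "p < n*n" "lo C n k p \<le> t" "t < lo C n k (Suc p)"
    using step_find[of "lo C n k" t "n*n"] by blast
  then show ?thesis using kn unfolding Iv_def by auto
qed

lemma sf_in: assumes "k < n" "p < n*n" "t \<in> Iv C n k p" shows "sf C n \<phi> t = \<phi> p"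
proof -
  have ind: "indicator (Iv C n k' p') t = (if k' = k \<and> p' = p then 1 else (0::real))"
    if "k' < n" "p' < n*n" for k' p'
    using Iv_disj[OF c n assms(1,2) that] assms by (auto simp: indicator_def)
  have "sf C n \<phi> t = (\<Sum>k'<n. \<Sum>p'<n*n. (if k' = k \<and> p' = p then \<phi> p' else 0))"
    unfolding sf_def by (intro sum.cong refl) (simp add: ind)
  also have "\<dots> = (\<Sum>k'<n. (if k' = k then \<phi> p else 0))"
    by (intro sum.cong refl) (use assms in auto)
  also have "\<dots> = \<phi> p" using assms by simp
  finally show ?thesis .
qed

lemma sf_out: "(\<And>k p. k < n \<Longrightarrow> p < n*n \<Longrightarrow> t \<notin> Iv C n k p) \<Longrightarrow> sf C n \<phi> t = 0"
  unfolding sf_def by (auto intro!: sum.neutral)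

lemma sf_cases: "(\<exists>k<n. \<exists>p<n*n. t \<in> Iv C n k p \<and> sf C n \<phi> t = \<phi> p) \<or> sf C n \<phi> t = 0"
  using sf_in sf_out by blast

lemma IL: assumes d: "d \<le> n"
  shows "(LINT t:{0..real d/real n}|lborel. \<Phi> (sf C n \<phi> t) (sf C n \<psi> t))
       = (\<Sum>k<d. \<Sum>p<n*n. mp C n k p * \<Phi> (\<phi> p) (\<psi> p))"
proof -
  define e where "e = \<Phi> (sf C n \<phi> (real d/real n)) (sf C n \<psi> (real d/real n))"
  have pw: "indicator {0..real d/real n} t * \<Phi> (sf C n \<phi> t) (sf C n \<psi> t)
     = (\<Sum>k<d. \<Sum>p<n*n. indicator (Iv C n k p) t * \<Phi> (\<phi> p) (\<psi> p)) + indicator {real d/real n} t * e" for t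
  proof -
    have dn: "real d / real n \<le> 1" using d n by simp
    have out: "t \<notin> Iv C n k p" if "k < d" "p < n*n" "\<not> (0 \<le> t \<and> t < real d / real n)" for k p
    proof
      assume t: "t \<in> Iv C n k p"
      have "real (Suc k) / real n \<le> real d / real n" using that n by (intro divide_right_mono) auto
      moreover have "0 \<le> real k / real n" by simp
      moreover have "real k / real n \<le> t \<and> t < real (Suc k) / real n" using Iv_sub[OF c n _ that(2) t] that d by auto
      ultimately show False using that(3) by linarith
    qed
    show ?thesis
    proof (cases "0 \<le> t \<and> t < real d / real n")
      case True
      then obtain k p where kp: "k < n" "p < n*n" "t \<in> Iv C n k p" using Iv_cover[of t] dn by auto
      have "real k / real n \<le> t" using Iv_sub[OF c n kp] by auto
      then have "real k / real n < real d / real n" using True by linarith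
      then have kd: "k < d" using n by (simp add: divide_less_cancel)
      have ind: "indicator (Iv C n k' p') t = (if k' = k \<and> p' = p then 1 else (0::real))"
        if "k' < d" "p' < n*n" for k' p'
        using Iv_disj[OF c n kp(1,2) _ that(2), of k' t] kp that d by (auto simp: indicator_def)
      have "(\<Sum>k<d. \<Sum>p<n*n. indicator (Iv C n k p) t * \<Phi> (\<phi> p) (\<psi> p))
          = (\<Sum>k'<d. \<Sum>p'<n*n. (if k' = k \<and> p' = p then \<Phi> (\<phi> p') (\<psi> p') else 0))"
        by (intro sum.cong refl) (simp add: ind)
      also have "\<dots> = (\<Sum>k'<d. (if k' = k then \<Phi> (\<phi> p) (\<psi> p) else 0))"
        by (intro sum.cong refl) (use kp in auto)
      also have "\<dots> = \<Phi> (\<phi> p) (\<psi> p)" using kd by simp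
      finally show ?thesis using True sf_in[OF kp] by (simp add: indicator_def)
    next
      case False
      have "(\<Sum>k<d. \<Sum>p<n*n. indicator (Iv C n k p) t * \<Phi> (\<phi> p) (\<psi> p)) = 0"
        using out[OF _ _ False] by (intro sum.neutral ballI) (simp add: indicator_def)
      then show ?thesis using False by (auto simp: indicator_def e_def)
    qed
  qed
  have meas: "measure lborel (Iv C n k p) = mp C n k p" if "k < d" "p < n*n" for k p
    using lo_sub[OF c n _ that(2), of k] that d by (simp add: Iv_def lo_def Sc_def)
  have "(LINT t:{0..real d/real n}|lborel. \<Phi> (sf C n \<phi> t) (sf C n \<psi> t))
     = integral\<^sup>L lborel (\<lambda>t. (\<Sum>k<d. \<Sum>p<n*n. indicator (Iv C n k p) t * \<Phi> (\<phi> p) (\<psi> p)) + indicator {real d/real n} t * e)"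
    unfolding set_lebesgue_integral_def by (simp add: pw)
  also have "\<dots> = (\<Sum>k<d. \<Sum>p<n*n. measure lborel (Iv C n k p) * \<Phi> (\<phi> p) (\<psi> p))"
  proof -
    have ii: "integrable lborel (\<lambda>t. indicator (Iv C n k p) t * \<Phi> (\<phi> p) (\<psi> p))" for k p
      by (intro integrable_mult_left) (auto simp: Iv_def integrable_Ico)
    have i1: "integrable lborel (\<lambda>t. (\<Sum>k<d. \<Sum>p<n*n. indicator (Iv C n k p) t * \<Phi> (\<phi> p) (\<psi> p)))"
      apply (rule Bochner_Integration.integrable_sum)
      apply (rule Bochner_Integration.integrable_sum)
      apply (rule ii)
      done
    have i2: "integrable lborel (\<lambda>t. indicator {real d/real n} t * e)"
      by (intro integrable_mult_left) auto
    have "integral\<^sup>L lborel (\<lambda>t. indicator {real d/real n} t * e) = 0" by simp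
    moreover have "integral\<^sup>L lborel (\<lambda>t. indicator (Iv C n k p) t * \<Phi> (\<phi> p) (\<psi> p))
        = measure lborel (Iv C n k p) * \<Phi> (\<phi> p) (\<psi> p)" for k p
      by simp
    moreover have "integral\<^sup>L lborel (\<lambda>t. (\<Sum>k<d. \<Sum>p<n*n. indicator (Iv C n k p) t * \<Phi> (\<phi> p) (\<psi> p)))
       = (\<Sum>k<d. integral\<^sup>L lborel (\<lambda>t. \<Sum>p<n*n. indicator (Iv C n k p) t * \<Phi> (\<phi> p) (\<psi> p)))"
      by (rule Bochner_Integration.integral_sum) (intro Bochner_Integration.integrable_sum ii)
    moreover have "integral\<^sup>L lborel (\<lambda>t. \<Sum>p<n*n. indicator (Iv C n k p) t * \<Phi> (\<phi> p) (\<psi> p))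
       = (\<Sum>p<n*n. integral\<^sup>L lborel (\<lambda>t. indicator (Iv C n k p) t * \<Phi> (\<phi> p) (\<psi> p)))" for k
      by (rule Bochner_Integration.integral_sum) (rule ii)
    ultimately show ?thesis
      by (simp only: Bochner_Integration.integral_add[OF i1 i2])
  qed
  also have "\<dots> = (\<Sum>k<d. \<Sum>p<n*n. mp C n k p * \<Phi> (\<phi> p) (\<psi> p))"
    by (intro sum.cong refl) (simp add: meas)
  finally show ?thesis .
qed

end

definition "clamp01 (x::real) = max 0 (min 1 x)"
definition "Gf (n::nat) a b u1 u2 = clamp01 (real n * min (u1 - a) (u2 - b))"
definition "ai C n = sf C n (\<lambda>p. real (p div n) / real n)"
definition "bi C n = sf C n (\<lambda>p. real (p mod n) / real n)"
definition "Uw = uniform_measure lborel {0..1::real}"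
definition "Kd C n t = distr Uw borel (\<lambda>w. (ai C n t + w / real n, bi C n t + w / real n))"
definition "Dd C n u1 u2 v = (LINT t:{0..v}|lborel. measure (Kd C n t) ({0..u1}\<times>{0..u2}))"

lemma sets_Uw[simp]: "sets Uw = sets borel" and space_Uw[simp]: "space Uw = UNIV"
  by (auto simp: Uw_def)

lemma prob_Uw: "prob_space Uw"
  unfolding Uw_def by (rule prob_space_uniform_measure) auto

lemma measure_Uw: "A \<in> sets borel \<Longrightarrow> measure Uw A = measure lborel ({0..1} \<inter> A)"
  unfolding Uw_def by (subst measure_uniform_measure) auto

lemma sf_meas[measurable]: "sf C n \<phi> \<in> borel_measurable borel"
  unfolding sf_def Iv_def by measurable

lemma ai_meas[measurable]: "ai C n \<in> borel_measurable borel" and bi_meas[measurable]: "bi C n \<in> borel_measurable borel"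
  unfolding ai_def bi_def by measurable

lemma meas_Uw_pair: "(\<lambda>w. (a + w / real n, b + w / real n)) \<in> measurable Uw borel"
proof -
  have "(\<lambda>w::real. (a + w / real n, b + w / real n)) \<in> measurable borel borel"
    unfolding borel_prod[symmetric] by measurable
  then show ?thesis using measurable_cong_sets[OF sets_Uw refl] by blast
qed

lemma KM: assumes n: "0 < n" and a: "0 \<le> a" and b: "0 \<le> b"
  shows "measure (distr Uw borel (\<lambda>w. (a + w / real n, b + w / real n))) ({0..u1}\<times>{0..u2}) = Gf n a b u1 u2"
proof -
  define c where "c = real n * min (u1 - a) (u2 - b)"
  note m = meas_Uw_pair[of a n b]
  have S: "{0..u1}\<times>{0..u2} \<in> sets (borel :: (real\<times>real) measure)"
    by (intro borel_closed closed_Times) auto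
  have pre: "{0..1} \<inter> ((\<lambda>w. (a + w / real n, b + w / real n)) -` ({0..u1}\<times>{0..u2}) \<inter> space Uw)
      = {0..1} \<inter> {..c}"
  proof -
    have cm: "c = min (real n * (u1 - a)) (real n * (u2 - b))"
      unfolding c_def using n by (cases "u1 - a \<le> u2 - b") (auto simp: min_def)
    have "w \<le> c \<longleftrightarrow> (a + w / real n \<le> u1 \<and> b + w / real n \<le> u2)" for w
      unfolding cm using n by (auto simp: field_simps)
    moreover have "0 \<le> w \<Longrightarrow> 0 \<le> a + w / real n \<and> 0 \<le> b + w / real n" for w
      using a b n by auto
    ultimately show ?thesis by auto
  qed
  have mc: "measure lborel ({0..1} \<inter> {..c}) = clamp01 c"
  proof (cases "c < 0")
    case True then have "{0..1} \<inter> {..c} = {}" by auto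
    then show ?thesis using True by (simp add: clamp01_def)
  next
    case False then have "{0..1} \<inter> {..c} = {0..min 1 c}" by auto
    then show ?thesis using False by (simp add: clamp01_def)
  qed
  have "measure (distr Uw borel (\<lambda>w. (a + w / real n, b + w / real n))) ({0..u1}\<times>{0..u2})
     = measure Uw ((\<lambda>w. (a + w / real n, b + w / real n)) -` ({0..u1}\<times>{0..u2}) \<inter> space Uw)"
    by (rule measure_distr[OF m S])
  also have "\<dots> = measure lborel ({0..1} \<inter> ((\<lambda>w. (a + w / real n, b + w / real n)) -` ({0..u1}\<times>{0..u2}) \<inter> space Uw))"
    using measurable_sets[OF m S] by (intro measure_Uw) simp
  also have "\<dots> = measure lborel ({0..1} \<inter> {..c})" by (simp only: pre)
  also have "\<dots> = clamp01 c" by (rule mc)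
  finally show ?thesis by (simp add: Gf_def c_def)
qed

context
  fixes C :: "real\<Rightarrow>real\<Rightarrow>real\<Rightarrow>real" and n :: nat assumes c: "copula3 C" and n: "0 < n"
begin

lemma sf_range: assumes "\<And>p. p < n*n \<Longrightarrow> lo' \<le> \<phi> p \<and> \<phi> p \<le> hi'" "lo' \<le> 0" "0 \<le> hi'"
  shows "lo' \<le> sf C n \<phi> t \<and> sf C n \<phi> t \<le> hi'"
  using sf_cases[OF c n, of t \<phi>] assms by auto

lemma ai_range: "0 \<le> ai C n t \<and> ai C n t \<le> 1 - 1 / real n"
  unfolding ai_def
proof (rule sf_range)
  fix p assume p: "p < n*n"
  have "p div n + 1 \<le> n" using p_div_lt[OF p] by simp
  then have "real (p div n) + 1 \<le> real n" by linarith
  then show "0 \<le> real (p div n) / real n \<and> real (p div n) / real n \<le> 1 - 1 / real n"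
    using n by (simp add: field_simps)
qed (use n in auto)

lemma bi_range: "0 \<le> bi C n t \<and> bi C n t \<le> 1 - 1 / real n"
  unfolding bi_def
proof (rule sf_range)
  fix p assume p: "p < n*n"
  have "p mod n + 1 \<le> n" using p_mod_lt[OF p] by simp
  then have "real (p mod n) + 1 \<le> real n" by linarith
  then show "0 \<le> real (p mod n) / real n \<and> real (p mod n) / real n \<le> 1 - 1 / real n"
    using n by (simp add: field_simps)
qed (use n in auto)

lemma Kd_measure: "measure (Kd C n t) ({0..u1}\<times>{0..u2}) = Gf n (ai C n t) (bi C n t) u1 u2"
  unfolding Kd_def using ai_range bi_range by (intro KM n) auto

lemma Kd_prob: "prob_space (Kd C n t)"
  unfolding Kd_def by (intro prob_space.prob_space_distr prob_Uw) (rule meas_Uw_pair)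

lemma sets_Kd[simp]: "sets (Kd C n t) = sets borel"
  by (simp add: Kd_def)

lemma Gf_11: "0 \<le> a \<Longrightarrow> a \<le> 1 - 1 / real n \<Longrightarrow> 0 \<le> b \<Longrightarrow> b \<le> 1 - 1 / real n \<Longrightarrow> Gf n a b 1 1 = 1"
proof -
  assume "0 \<le> a" "a \<le> 1 - 1 / real n" "0 \<le> b" "b \<le> 1 - 1 / real n"
  then have "1 \<le> real n * (1 - a)" "1 \<le> real n * (1 - b)" using n by (auto simp: field_simps)
  then have "1 \<le> real n * min (1 - a) (1 - b)" by (simp add: min_def)
  then show ?thesis by (simp add: Gf_def clamp01_def)
qed

lemma Kd_meas: "Kd C n \<in> measurable (restrict_space borel {0..1}) (subprob_algebra borel)"
  unfolding Kd_def
proof (rule measurable_distr2[where M=borel])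
  show "(\<lambda>x. Uw) \<in> restrict_space borel {0..1} \<rightarrow>\<^sub>M subprob_algebra borel"
    by (rule measurable_const) (auto simp: space_subprob_algebra prob_Uw prob_space_imp_subprob_space)
  show "(\<lambda>(t, w). (ai C n t + w / real n, bi C n t + w / real n)) \<in> restrict_space borel {0..1} \<Otimes>\<^sub>M borel \<rightarrow>\<^sub>M borel"
  proof -
    have dv: "(\<lambda>w::real. w / real n) \<in> borel_measurable borel" by measurable
    have s1: "(\<lambda>x::real\<times>real. snd x / real n) \<in> borel_measurable (restrict_space borel {0..1} \<Otimes>\<^sub>M borel)"
      by (rule measurable_compose[OF measurable_snd dv])
    have f1: "(\<lambda>x. ai C n (fst x)) \<in> borel_measurable (restrict_space borel {0..1} \<Otimes>\<^sub>M borel)"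
      by (rule measurable_compose[OF measurable_fst measurable_restrict_space1[OF ai_meas]])
    have f2: "(\<lambda>x. bi C n (fst x)) \<in> borel_measurable (restrict_space borel {0..1} \<Otimes>\<^sub>M borel)"
      by (rule measurable_compose[OF measurable_fst measurable_restrict_space1[OF bi_meas]])
    have "(\<lambda>x. (ai C n (fst x) + snd x / real n, bi C n (fst x) + snd x / real n))
       \<in> restrict_space borel {0..1} \<Otimes>\<^sub>M borel \<rightarrow>\<^sub>M borel \<Otimes>\<^sub>M borel"
      by (intro measurable_Pair borel_measurable_add f1 f2 s1)
    then show ?thesis unfolding borel_prod by (simp add: case_prod_beta)
  qed
qed

end

lemma copula2_min: "copula2 (\<lambda>a b. min a b)"
  unfolding copula2_def by (auto simp: min_def)

lemma min_2inc: "(x::real) \<le> x' \<Longrightarrow> y \<le> y' \<Longrightarrow> 0 \<le> min x' y' - min x y' - min x' y + min x y"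
  by (simp add: min_def)

lemma clamp_sum: "(\<Sum>i<n. clamp01 (y - real i)) = max 0 (min (real n) y)"
  by (induct n) (auto simp: clamp01_def min_def max_def)

lemma swap3: "(\<Sum>k\<in>A. \<Sum>i\<in>B. \<Sum>j\<in>D. F i j k) = (\<Sum>i\<in>B. \<Sum>j\<in>D. \<Sum>k\<in>A. (F i j k :: real))"
  by (subst sum.swap) (intro sum.cong refl, rule sum.swap)

lemma sum_if_mult: "(\<Sum>j\<in>J. (f j::real) * (if P then if Q j then 1 else 0 else 0)) = (if P then \<Sum>j\<in>J. if Q j then f j else 0 else 0)"
  by (cases P) (auto intro!: sum.cong)

lemma sum_if_lt: fixes a n :: nat shows "a \<le> n \<Longrightarrow> (\<Sum>i<n. if i < a then F i else 0) = (\<Sum>i<a. (F i :: real))"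
proof -
  assume "a \<le> n"
  then have "{x\<in>{..<n}. x < a} = {..<a}" by auto
  then show ?thesis using sum.inter_filter[of "{..<n}" F "\<lambda>i. i < a"] by simp
qed

lemma nmin: "0 \<le> (c::real) \<Longrightarrow> c * min p q = min (c*p) (c*q)"
  by (cases "c = 0") (auto simp: min_def mult_le_cancel_left)

lemma Gf_meas[measurable]: "(\<lambda>t. Gf n (ai C n t) (bi C n t) u1 u2) \<in> borel_measurable borel"
  unfolding Gf_def clamp01_def by measurable

lemma Gf_bnd: "0 \<le> Gf n a b u1 u2 \<and> Gf n a b u1 u2 \<le> 1"
  by (simp add: Gf_def clamp01_def)

lemma leb_eq: "f \<in> borel_measurable borel \<Longrightarrow> (LINT t:{0..v}|lebesgue. f t) = (LINT t:{0..v::real}|lborel. (f t :: real))"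
  unfolding set_lebesgue_integral_def by (rule integral_completion) measurable

lemma intG: "integrable lborel (\<lambda>t. indicator {0..z} t * Gf n (ai C n t) (bi C n t) u1 u2)"
proof (rule integrableI_bounded_set[where A="{0..z}" and B=1])
  show "AE x in lborel. x \<in> {0..z} \<longrightarrow> norm (indicator {0..z} x * Gf n (ai C n x) (bi C n x) u1 u2) \<le> 1"
    using Gf_bnd by (auto simp: indicator_def)
qed (auto simp: emeasure_lborel_Icc_eq)

context
  fixes C :: "real\<Rightarrow>real\<Rightarrow>real\<Rightarrow>real" and n :: nat assumes c: "copula3 C" and n: "0 < n"
begin

lemma Dd_eq: "Dd C n u1 u2 v = (LINT t:{0..v}|lborel. Gf n (ai C n t) (bi C n t) u1 u2)"
  unfolding Dd_def Kd_measure[OF c n] ..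

lemma Gf_min: assumes "0 \<le> a" "a \<le> 1 - 1 / real n" "0 \<le> b" "b \<le> 1 - 1 / real n"
  shows "Gf n a b u1 u2 = min (Gf n a b u1 1) (Gf n a b 1 u2)"
proof -
  have X: "1 \<le> real n * (1 - a)" "1 \<le> real n * (1 - b)" using n assms by (auto simp: field_simps)
  have e: "real n * min p q = min (real n * p) (real n * q)" for p q
    using n by (cases "p \<le> q") (auto simp: min_def)
  show ?thesis unfolding Gf_def e using X by (auto simp: clamp01_def min_def max_def)
qed

lemma Gf_2inc: assumes "0 \<le> a" "a \<le> 1 - 1 / real n" "0 \<le> b" "b \<le> 1 - 1 / real n" "u1 \<le> u1'" "u2 \<le> u2'"
  shows "0 \<le> Gf n a b u1' u2' - Gf n a b u1 u2' - Gf n a b u1' u2 + Gf n a b u1 u2"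
proof -
  have m1: "Gf n a b u1 1 \<le> Gf n a b u1' 1" using assms n
    unfolding Gf_def clamp01_def by (intro max.mono min.mono mult_left_mono) auto
  have m2: "Gf n a b 1 u2 \<le> Gf n a b 1 u2'" using assms n
    unfolding Gf_def clamp01_def by (intro max.mono min.mono mult_left_mono) auto
  show ?thesis using min_2inc[OF m1 m2] Gf_min[OF assms(1-4)] by metis
qed

lemma margsum1: "i < n \<Longrightarrow> (\<Sum>j<n. \<Sum>k<n. cm C n i j k) = 1 / real n"
proof -
  assume i: "i < n"
  have "(\<Sum>j<n. \<Sum>k<n. cm C n i j k) = vol C (real i/real n) (real (Suc i)/real n) 0 1 0 1"
    unfolding cm_def sv3 sv2 using n by simp
  also have "\<dots> = 1 / real n"
    using i n frac01[of i n] frac01[of "Suc i" n]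
    by (simp add: vol_def c3_g2[OF c] c3_g3[OF c] c3_m1[OF c] diff_divide_distrib[symmetric])
  finally show ?thesis .
qed

lemma margsum2: "j < n \<Longrightarrow> (\<Sum>i<n. \<Sum>k<n. cm C n i j k) = 1 / real n"
proof -
  assume j: "j < n"
  have "(\<Sum>i<n. \<Sum>k<n. cm C n i j k) = vol C 0 1 (real j/real n) (real (Suc j)/real n) 0 1"
    unfolding cm_def sv3 sv1 using n by simp
  also have "\<dots> = 1 / real n"
    using j n frac01[of j n] frac01[of "Suc j" n]
    by (simp add: vol_def c3_g1[OF c] c3_g3[OF c] c3_m2[OF c] diff_divide_distrib[symmetric])
  finally show ?thesis .
qed

lemma IL1: "(LINT t:{0..1}|lborel. \<Phi> (ai C n t) (bi C n t))
    = (\<Sum>k<n. \<Sum>i<n. \<Sum>j<n. cm C n i j k * \<Phi> (real i / real n) (real j / real n))"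
proof -
  have "(LINT t:{0..1}|lborel. \<Phi> (ai C n t) (bi C n t)) = (LINT t:{0..real n/real n}|lborel. \<Phi> (ai C n t) (bi C n t))"
    using n by simp
  also have "\<dots> = (\<Sum>k<n. \<Sum>p<n*n. mp C n k p * \<Phi> (real (p div n) / real n) (real (p mod n) / real n))"
    unfolding ai_def bi_def by (rule IL[OF c n]) simp
  also have "\<dots> = (\<Sum>k<n. \<Sum>i<n. \<Sum>j<n. cm C n i j k * \<Phi> (real i / real n) (real j / real n))"
    unfolding mp_def by (intro sum.cong refl sum_divmod)
  finally show ?thesis .
qed

end

context
  fixes C :: "real\<Rightarrow>real\<Rightarrow>real\<Rightarrow>real" and n :: nat assumes c: "copula3 C" and n: "0 < n"
begin

lemma Dd_x11: "x \<in> {0..1} \<Longrightarrow> Dd C n x 1 1 = x"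
proof -
  assume x: "x \<in> {0..1}"
  have g: "Gf n (real i / real n) (real j / real n) x 1 = clamp01 (real n * x - real i)" if "j < n" for i j
  proof -
    have "real n * min (x - real i / real n) (1 - real j / real n) = min (real n * x - real i) (real n - real j)"
      using n by (simp add: nmin right_diff_distrib)
    moreover have "1 \<le> real n - real j" using that by linarith
    ultimately show ?thesis by (auto simp: Gf_def clamp01_def min_def max_def)
  qed
  have "Dd C n x 1 1 = (\<Sum>k<n. \<Sum>i<n. \<Sum>j<n. cm C n i j k * Gf n (real i / real n) (real j / real n) x 1)"
    by (rule trans[OF Dd_eq[OF c n] IL1[OF c n, of "\<lambda>a b. Gf n a b x 1"]])
  also have "\<dots> = (\<Sum>i<n. \<Sum>j<n. \<Sum>k<n. cm C n i j k * clamp01 (real n * x - real i))"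
    by (subst swap3) (intro sum.cong refl, simp add: g)
  also have "\<dots> = (\<Sum>i<n. (\<Sum>j<n. \<Sum>k<n. cm C n i j k) * clamp01 (real n * x - real i))"
    by (simp add: sum_distrib_right)
  also have "\<dots> = (\<Sum>i<n. clamp01 (real n * x - real i)) / real n"
    by (simp add: margsum1[OF c n] sum_divide_distrib)
  also have "\<dots> = x" using x n by (simp add: clamp_sum min_def max_def)
  finally show ?thesis .
qed

lemma Dd_1x1: "x \<in> {0..1} \<Longrightarrow> Dd C n 1 x 1 = x"
proof -
  assume x: "x \<in> {0..1}"
  have g: "Gf n (real i / real n) (real j / real n) 1 x = clamp01 (real n * x - real j)" if "i < n" for i j
  proof -
    have "real n * min (1 - real i / real n) (x - real j / real n) = min (real n - real i) (real n * x - real j)"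
      using n by (simp add: nmin right_diff_distrib)
    moreover have "1 \<le> real n - real i" using that by linarith
    ultimately show ?thesis by (auto simp: Gf_def clamp01_def min_def max_def)
  qed
  have "Dd C n 1 x 1 = (\<Sum>k<n. \<Sum>i<n. \<Sum>j<n. cm C n i j k * Gf n (real i / real n) (real j / real n) 1 x)"
    by (rule trans[OF Dd_eq[OF c n] IL1[OF c n, of "\<lambda>a b. Gf n a b 1 x"]])
  also have "\<dots> = (\<Sum>i<n. \<Sum>j<n. \<Sum>k<n. cm C n i j k * clamp01 (real n * x - real j))"
    by (subst swap3) (intro sum.cong refl, simp add: g)
  also have "\<dots> = (\<Sum>j<n. \<Sum>i<n. \<Sum>k<n. cm C n i j k * clamp01 (real n * x - real j))"
    by (rule sum.swap)
  also have "\<dots> = (\<Sum>j<n. (\<Sum>i<n. \<Sum>k<n. cm C n i j k) * clamp01 (real n * x - real j))"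
    by (simp add: sum_distrib_right)
  also have "\<dots> = (\<Sum>j<n. clamp01 (real n * x - real j)) / real n"
    by (simp add: margsum2[OF c n] sum_divide_distrib)
  also have "\<dots> = x" using x n by (simp add: clamp_sum min_def max_def)
  finally show ?thesis .
qed

lemma Dd_11x: "x \<in> {0..1} \<Longrightarrow> Dd C n 1 1 x = x"
proof -
  assume x: "x \<in> {0..1}"
  have "Dd C n 1 1 x = (LINT t:{0..x}|lborel. 1)"
    unfolding Dd_eq[OF c n] using ai_range[OF c n] bi_range[OF c n] by (simp add: Gf_11[OF c n])
  also have "\<dots> = x" using x by (simp add: set_lebesgue_integral_def)
  finally show ?thesis .
qed

lemma Dd_grid: assumes "a \<le> n" "b \<le> n" "d \<le> n"
  shows "Dd C n (real a/real n) (real b/real n) (real d/real n) = C (real a/real n) (real b/real n) (real d/real n)"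
proof -
  have g: "Gf n (real i / real n) (real j / real n) (real a/real n) (real b/real n) = (if i < a then if j < b then 1 else 0 else 0)" for i j
  proof -
    have "real n * min (real a/real n - real i / real n) (real b/real n - real j / real n) = min (real a - real i) (real b - real j)"
      using n by (simp add: nmin right_diff_distrib)
    then show ?thesis by (auto simp: Gf_def clamp01_def min_def max_def)
  qed
  have "Dd C n (real a/real n) (real b/real n) (real d/real n)
      = (\<Sum>k<d. \<Sum>p<n*n. mp C n k p * Gf n (real (p div n) / real n) (real (p mod n) / real n) (real a/real n) (real b/real n))"
    unfolding Dd_eq[OF c n] ai_def bi_def by (rule IL[OF c n assms(3), of "\<lambda>p q. Gf n p q (real a/real n) (real b/real n)"])
  also have "\<dots> = (\<Sum>k<d. \<Sum>i<n. \<Sum>j<n. cm C n i j k * (if i < a then if j < b then 1 else 0 else 0))"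
    unfolding mp_def g by (intro sum.cong refl sum_divmod)
  also have "\<dots> = (\<Sum>k<d. \<Sum>i<n. if i < a then (\<Sum>j<n. if j < b then cm C n i j k else 0) else 0)"
    by (intro sum.cong refl) (rule sum_if_mult)
  also have "\<dots> = (\<Sum>k<d. \<Sum>i<a. \<Sum>j<b. cm C n i j k)"
    using assms by (simp add: sum_if_lt)
  also have "\<dots> = (\<Sum>i<a. \<Sum>j<b. \<Sum>k<d. cm C n i j k)" by (rule swap3)
  also have "\<dots> = C (real a/real n) (real b/real n) (real d/real n)" by (rule cm_grid[OF c assms])
  finally show ?thesis .
qed


lemma Gf_0x: "0 \<le> a \<Longrightarrow> Gf n a b 0 u = 0"
proof -
  assume a: "0 \<le> a"
  have "real n * min (0 - a) (u - b) \<le> 0"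
    using a by (intro mult_nonneg_nonpos) (auto simp: min_def)
  then show ?thesis by (simp add: Gf_def clamp01_def)
qed

lemma Gf_x0: "0 \<le> b \<Longrightarrow> Gf n a b u 0 = 0"
proof -
  assume b: "0 \<le> b"
  have "real n * min (u - a) (0 - b) \<le> 0"
    using b by (intro mult_nonneg_nonpos) (auto simp: min_def)
  then show ?thesis by (simp add: Gf_def clamp01_def)
qed

lemma LINT_00: fixes f :: "real \<Rightarrow> real" shows "(LINT t:{0..0}|lborel. f t) = 0"
proof -
  have "(\<lambda>t. indicator {0..0::real} t * f t) = (\<lambda>t. indicator {0} t * f 0)"
    by (auto simp: indicator_def)
  then show ?thesis by (simp add: set_lebesgue_integral_def)
qed

lemma Dd_copula3: "copula3 (Dd C n)"
proof -
  have b1: "Dd C n 0 x y = 0" for x y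
    unfolding Dd_eq[OF c n] using ai_range[OF c n] by (simp add: Gf_0x)
  have b2: "Dd C n x 0 y = 0" for x y
    unfolding Dd_eq[OF c n] using bi_range[OF c n] by (simp add: Gf_x0)
  have b3: "Dd C n x y 0 = 0" for x y
    unfolding Dd_eq[OF c n] by (rule LINT_00)
  have inc: "0 \<le> vol (Dd C n) a1 b1 a2 b2 a3 b3"
    if le: "a1 \<le> b1" "a2 \<le> b2" "a3 \<le> b3" for a1 b1 a2 b2 a3 b3
  proof -
    define G where "G u1 u2 t = Gf n (ai C n t) (bi C n t) u1 u2" for u1 u2 t
    have D: "Dd C n u1 u2 v = integral\<^sup>L lborel (\<lambda>t. indicator {0..v} t * G u1 u2 t)" for u1 u2 v
      unfolding Dd_eq[OF c n] set_lebesgue_integral_def G_def by simp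
    have I: "integrable lborel (\<lambda>t. indicator {0..v} t * G u1 u2 t)" for u1 u2 v
      unfolding G_def by (rule intG)
    have eq: "vol (Dd C n) a1 b1 a2 b2 a3 b3 = integral\<^sup>L lborel (\<lambda>t.
        indicator {0..b3} t * G b1 b2 t - indicator {0..b3} t * G a1 b2 t - indicator {0..b3} t * G b1 a2 t
        - indicator {0..a3} t * G b1 b2 t + indicator {0..b3} t * G a1 a2 t + indicator {0..a3} t * G a1 b2 t
        + indicator {0..a3} t * G b1 a2 t - indicator {0..a3} t * G a1 a2 t)"
      unfolding vol_def D by (simp add: I)
    have "0 \<le> integral\<^sup>L lborel (\<lambda>t.
        indicator {0..b3} t * G b1 b2 t - indicator {0..b3} t * G a1 b2 t - indicator {0..b3} t * G b1 a2 t
        - indicator {0..a3} t * G b1 b2 t + indicator {0..b3} t * G a1 a2 t + indicator {0..a3} t * G a1 b2 t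
        + indicator {0..a3} t * G b1 a2 t - indicator {0..a3} t * G a1 a2 t)"
    proof (rule Bochner_Integration.integral_nonneg)
      fix t :: real
      have dl: "0 \<le> G b1 b2 t - G a1 b2 t - G b1 a2 t + G a1 a2 t"
        unfolding G_def using ai_range[OF c n, of t] bi_range[OF c n, of t] le
        by (intro Gf_2inc[OF c n]) auto
      have ii: "0 \<le> indicator {0..b3} t - (indicator {0..a3} t :: real)"
        using le by (auto simp: indicator_def)
      have "indicator {0..b3} t * G b1 b2 t - indicator {0..b3} t * G a1 b2 t - indicator {0..b3} t * G b1 a2 t
        - indicator {0..a3} t * G b1 b2 t + indicator {0..b3} t * G a1 a2 t + indicator {0..a3} t * G a1 b2 t
        + indicator {0..a3} t * G b1 a2 t - indicator {0..a3} t * G a1 a2 t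
        = (indicator {0..b3} t - indicator {0..a3} t) * (G b1 b2 t - G a1 b2 t - G b1 a2 t + G a1 a2 t)"
        by (simp add: algebra_simps)
      then show "0 \<le> indicator {0..b3} t * G b1 b2 t - indicator {0..b3} t * G a1 b2 t - indicator {0..b3} t * G b1 a2 t
        - indicator {0..a3} t * G b1 b2 t + indicator {0..b3} t * G a1 a2 t + indicator {0..a3} t * G a1 b2 t
        + indicator {0..a3} t * G b1 a2 t - indicator {0..a3} t * G a1 a2 t"
        using mult_nonneg_nonneg[OF ii dl] by simp
    qed
    then show ?thesis using eq by simp
  qed
  show ?thesis unfolding copula3_def
    using b1 b2 b3 Dd_x11 Dd_1x1 Dd_11x inc unfolding vol_def by auto
qed

lemma Dd_cond_kernel: "cond_kernel (Dd C n) (Kd C n)"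
  unfolding cond_kernel_def
proof (intro conjI ballI)
  show "Kd C n \<in> restrict_space borel {0..1} \<rightarrow>\<^sub>M subprob_algebra borel" by (rule Kd_meas[OF c n])
  fix t :: real
  show "prob_space (Kd C n t)" by (rule Kd_prob[OF c n])
  show "emeasure (Kd C n t) ({0..1} \<times> {0..1}) = 1"
  proof -
    have "finite_measure (Kd C n t)" using Kd_prob[OF c n, of t] by (simp add: prob_space_def)
    then show ?thesis
      using ai_range[OF c n, of t] bi_range[OF c n, of t]
      by (simp add: finite_measure.emeasure_eq_measure Kd_measure[OF c n] Gf_11[OF c n])
  qed
qed (simp add: Dd_def)

lemma F13_Kd: "F13 (Kd C n) t u = Gf n (ai C n t) (bi C n t) u 1"
  unfolding F13_def Kd_measure[OF c n] ..
lemma F23_Kd: "F23 (Kd C n) t u = Gf n (ai C n t) (bi C n t) 1 u"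
  unfolding F23_def Kd_measure[OF c n] ..

lemma Dd_cont: "cont_margins (Kd C n)"
  unfolding cont_margins_def F13_Kd F23_Kd Gf_def clamp01_def
  by (intro AE_I2 impI conjI continuous_intros)

lemma Dd_simplified: "simplified (Dd C n)"
  unfolding simplified_def
proof (intro conjI exI[of _ "Kd C n"] exI[of _ "\<lambda>a b. min a b"] Dd_copula3 Dd_cond_kernel Dd_cont copula2_min ballI)
  fix u1 u2 v :: real
  have "(LINT t:{0..v}|lebesgue. min (F13 (Kd C n) t u1) (F23 (Kd C n) t u2))
      = (LINT t:{0..v}|lebesgue. Gf n (ai C n t) (bi C n t) u1 u2)"
    unfolding F13_Kd F23_Kd using ai_range[OF c n] bi_range[OF c n] by (simp add: Gf_min[OF c n, symmetric])
  also have "\<dots> = (LINT t:{0..v}|lborel. Gf n (ai C n t) (bi C n t) u1 u2)"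
    by (rule leb_eq) (rule Gf_meas)
  finally show "Dd C n u1 u2 v = (LINT t:{0..v}|lebesgue. min (F13 (Kd C n) t u1) (F23 (Kd C n) t u2))"
    unfolding Dd_eq[OF c n] by simp
qed

lemma round_grid: assumes "x \<in> {0..1}" obtains a where "a \<le> n" "\<bar>x - real a / real n\<bar> \<le> 1 / real n"
proof -
  define a where "a = nat \<lfloor>x * real n\<rfloor>"
  have fl: "real a \<le> x * real n" "x * real n < real a + 1"
    using assms unfolding a_def by (simp_all add: of_nat_nat)
  have "x * real n \<le> real n" using assms by (simp add: mult_left_le_one_le)
  then have "real a \<le> real n" using fl(1) by linarith
  then have "a \<le> n" by simp
  moreover have "\<bar>x - real a / real n\<bar> \<le> 1 / real n"
  proof -
    have e: "x - real a / real n = (x * real n - real a) / real n" using n by (simp add: field_simps)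
    have "\<bar>x * real n - real a\<bar> \<le> 1" using fl by simp
    then show ?thesis unfolding e using n by (simp add: divide_right_mono)
  qed
  ultimately show ?thesis using that by blast
qed

lemma Dd_close: assumes "x \<in> {0..1}" "y \<in> {0..1}" "z \<in> {0..1}"
  shows "\<bar>C x y z - Dd C n x y z\<bar> \<le> 6 / real n"
proof -
  obtain a where a: "a \<le> n" "\<bar>x - real a / real n\<bar> \<le> 1 / real n" using round_grid[OF assms(1)] by blast
  obtain b where b: "b \<le> n" "\<bar>y - real b / real n\<bar> \<le> 1 / real n" using round_grid[OF assms(2)] by blast
  obtain d where d: "d \<le> n" "\<bar>z - real d / real n\<bar> \<le> 1 / real n" using round_grid[OF assms(3)] by blast
  have g: "real a / real n \<in> {0..1}" "real b / real n \<in> {0..1}" "real d / real n \<in> {0..1}"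
    using a(1) b(1) d(1) frac01 by blast+
  have 1: "\<bar>C x y z - C (real a/real n) (real b/real n) (real d/real n)\<bar> \<le> 3 / real n"
    using c3_lip[OF c assms g] a b d by simp
  have 2: "\<bar>Dd C n x y z - Dd C n (real a/real n) (real b/real n) (real d/real n)\<bar> \<le> 3 / real n"
    using c3_lip[OF Dd_copula3 assms g] a b d by simp
  show ?thesis using 1 2 Dd_grid[OF a(1) b(1) d(1)] by simp
qed

end

lemma copula2D:
  assumes "copula2 A"
  shows c2_b: "\<And>u. u\<in>{0..1} \<Longrightarrow> A u 0 = 0 \<and> A 0 u = 0 \<and> A u 1 = u \<and> A 1 u = u"
    and c2_inc: "\<And>u1 u2 v1 v2. u1\<in>{0..1} \<Longrightarrow> u2\<in>{0..1} \<Longrightarrow> v1\<in>{0..1} \<Longrightarrow> v2\<in>{0..1} \<Longrightarrow>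
        u1 \<le> u2 \<Longrightarrow> v1 \<le> v2 \<Longrightarrow> A u2 v2 - A u1 v2 - A u2 v1 + A u1 v1 \<ge> 0"
  using assms unfolding copula2_def by blast+

lemma c2_lip: assumes A: "copula2 A" and r: "a\<in>{0..1}" "b\<in>{0..1}" "a'\<in>{0..1}" "b'\<in>{0..1}"
  shows "\<bar>A a b - A a' b'\<bar> \<le> \<bar>a - a'\<bar> + \<bar>b - b'\<bar>"
proof -
  have z: "(0::real)\<in>{0..1}" "(1::real)\<in>{0..1}" by auto
  have l1: "0 \<le> A y v - A x v \<and> A y v - A x v \<le> y - x" if "x\<in>{0..1}" "y\<in>{0..1}" "v\<in>{0..1}" "x \<le> y" for x y v
    using c2_inc[OF A that(1,2) z(1) that(3) that(4)] c2_inc[OF A that(1,2) that(3) z(2) that(4)] c2_b[OF A] that z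
    by auto
  have l2: "0 \<le> A v y - A v x \<and> A v y - A v x \<le> y - x" if "x\<in>{0..1}" "y\<in>{0..1}" "v\<in>{0..1}" "x \<le> y" for x y v
    using c2_inc[OF A z(1) that(3) that(1,2) _ that(4)] c2_inc[OF A that(3) z(2) that(1,2) _ that(4)] c2_b[OF A] that z
    by auto
  have "\<bar>A a b - A a' b\<bar> \<le> \<bar>a - a'\<bar>" using l1[of a a' b] l1[of a' a b] r by (cases "a \<le> a'") auto
  moreover have "\<bar>A a' b - A a' b'\<bar> \<le> \<bar>b - b'\<bar>" using l2[of b b' a'] l2[of b' b a'] r by (cases "b \<le> b'") auto
  ultimately show ?thesis by linarith
qed

lemma c2_range: assumes A: "copula2 A" and r: "a\<in>{0..1}" "b\<in>{0..1}" shows "0 \<le> A a b \<and> A a b \<le> 1"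
proof -
  have z: "(0::real)\<in>{0..1}" "(1::real)\<in>{0..1}" by auto
  show ?thesis
    using c2_inc[OF A z(1) r(1) z(1) r(2)] c2_inc[OF A z(1) r(1) r(2) z(2)] c2_b[OF A] r z by auto
qed

locale sk =
  fixes H :: "real \<Rightarrow> real \<Rightarrow> real"
  assumes rect: "\<And>x x' y y'. x\<in>{0..1} \<Longrightarrow> x'\<in>{0..1} \<Longrightarrow> y\<in>{0..1} \<Longrightarrow> y'\<in>{0..1} \<Longrightarrow> x \<le> x' \<Longrightarrow> y \<le> y'
      \<Longrightarrow> 0 \<le> H x' y' - H x y' - H x' y + H x y"
    and z1: "\<And>x. x\<in>{0..1} \<Longrightarrow> H x 0 = 0" and z2: "\<And>y. y\<in>{0..1} \<Longrightarrow> H 0 y = 0"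
    and one: "H 1 1 = 1"
    and cont1: "continuous_on {0..1} (\<lambda>x. H x 1)" and cont2: "continuous_on {0..1} (\<lambda>y. H 1 y)"
begin

lemma zo: "(0::real)\<in>{0..1}" "(1::real)\<in>{0..1}" by auto

lemma lipx: "x\<in>{0..1} \<Longrightarrow> x'\<in>{0..1} \<Longrightarrow> y\<in>{0..1} \<Longrightarrow> x \<le> x' \<Longrightarrow>
   0 \<le> H x' y - H x y \<and> H x' y - H x y \<le> H x' 1 - H x 1"
  using rect[of x x' 0 y] rect[of x x' y 1] z1 zo by auto

lemma lipy: "y\<in>{0..1} \<Longrightarrow> y'\<in>{0..1} \<Longrightarrow> x\<in>{0..1} \<Longrightarrow> y \<le> y' \<Longrightarrow>
   0 \<le> H x y' - H x y \<and> H x y' - H x y \<le> H 1 y' - H 1 y"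
  using rect[of 0 x y y'] rect[of x 1 y y'] z2 zo by auto

lemma absx: "x\<in>{0..1} \<Longrightarrow> x'\<in>{0..1} \<Longrightarrow> y\<in>{0..1} \<Longrightarrow> \<bar>H x y - H x' y\<bar> \<le> \<bar>H x 1 - H x' 1\<bar>"
  using lipx[of x x' y] lipx[of x' x y] by (cases "x \<le> x'") auto

lemma absy: "y\<in>{0..1} \<Longrightarrow> y'\<in>{0..1} \<Longrightarrow> x\<in>{0..1} \<Longrightarrow> \<bar>H x y - H x y'\<bar> \<le> \<bar>H 1 y - H 1 y'\<bar>"
  using lipy[of y y' x] lipy[of y' y x] by (cases "y \<le> y'") auto

lemma F1_range: "x\<in>{0..1} \<Longrightarrow> H x 1 \<in> {0..1}"
  using lipx[of 0 x 1] lipx[of x 1 1] z2 one zo by auto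
lemma F2_range: "y\<in>{0..1} \<Longrightarrow> H 1 y \<in> {0..1}"
  using lipy[of 0 y 1] lipy[of y 1 1] z1 one zo by auto

lemma surj1: "s\<in>{0..1} \<Longrightarrow> \<exists>x. x\<in>{0..1} \<and> H x 1 = s"
  using IVT'[of "\<lambda>x. H x 1" 0 s 1] cont1 z2 one zo by auto
lemma surj2: "s\<in>{0..1} \<Longrightarrow> \<exists>y. y\<in>{0..1} \<and> H 1 y = s"
  using IVT'[of "\<lambda>y. H 1 y" 0 s 1] cont2 z1 one zo by auto

definition "q1 s = (SOME x. x\<in>{0..1} \<and> H x 1 = s)"
definition "q2 s = (SOME y. y\<in>{0..1} \<and> H 1 y = s)"
definition "AA s1 s2 = H (q1 s1) (q2 s2)"

lemma q1: "s\<in>{0..1} \<Longrightarrow> q1 s \<in> {0..1} \<and> H (q1 s) 1 = s"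
  unfolding q1_def using someI_ex[OF surj1] by blast
lemma q2: "s\<in>{0..1} \<Longrightarrow> q2 s \<in> {0..1} \<and> H 1 (q2 s) = s"
  unfolding q2_def using someI_ex[OF surj2] by blast

lemma inv1: "x\<in>{0..1} \<Longrightarrow> x'\<in>{0..1} \<Longrightarrow> y\<in>{0..1} \<Longrightarrow> H x 1 = H x' 1 \<Longrightarrow> H x y = H x' y"
  using absx[of x x' y] by simp
lemma inv2: "y\<in>{0..1} \<Longrightarrow> y'\<in>{0..1} \<Longrightarrow> x\<in>{0..1} \<Longrightarrow> H 1 y = H 1 y' \<Longrightarrow> H x y = H x y'"
  using absy[of y y' x] by simp

lemma AA_rep: "x\<in>{0..1} \<Longrightarrow> y\<in>{0..1} \<Longrightarrow> H x y = AA (H x 1) (H 1 y)"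
proof -
  assume x: "x\<in>{0..1}" and y: "y\<in>{0..1}"
  have a: "q1 (H x 1) \<in> {0..1}" "H (q1 (H x 1)) 1 = H x 1" using q1[OF F1_range[OF x]] by auto
  have b: "q2 (H 1 y) \<in> {0..1}" "H 1 (q2 (H 1 y)) = H 1 y" using q2[OF F2_range[OF y]] by auto
  have "H x y = H (q1 (H x 1)) y" using inv1[OF x a(1) y] a(2) by simp
  also have "\<dots> = H (q1 (H x 1)) (q2 (H 1 y))" using inv2[OF y b(1) a(1)] b(2) by simp
  finally show ?thesis by (simp add: AA_def)
qed

lemma mono1: "x\<in>{0..1} \<Longrightarrow> x'\<in>{0..1} \<Longrightarrow> x \<le> x' \<Longrightarrow> H x 1 \<le> H x' 1"
  using lipx[of x x' 1] zo by auto
lemma mono2: "y\<in>{0..1} \<Longrightarrow> y'\<in>{0..1} \<Longrightarrow> y \<le> y' \<Longrightarrow> H 1 y \<le> H 1 y'"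
  using lipy[of y y' 1] zo by auto

lemma AA_copula: "copula2 AA"
  unfolding copula2_def
proof (intro conjI ballI impI)
  fix u :: real assume u: "u \<in> {0..1}"
  have a: "q1 u \<in> {0..1}" "H (q1 u) 1 = u" using q1[OF u] by auto
  have b: "q2 u \<in> {0..1}" "H 1 (q2 u) = u" using q2[OF u] by auto
  have a0: "q1 0 \<in> {0..1}" "H (q1 0) 1 = 0" and a1: "q1 1 \<in> {0..1}" "H (q1 1) 1 = 1"
    using q1[of 0] q1[of 1] by auto
  have b0: "q2 0 \<in> {0..1}" "H 1 (q2 0) = 0" and b1: "q2 1 \<in> {0..1}" "H 1 (q2 1) = 1"
    using q2[of 0] q2[of 1] by auto
  show "AA u 0 = 0" unfolding AA_def using inv2[OF b0(1) zo(1) a(1)] b0(2) z1[OF zo(1)] z1[OF a(1)] by (simp add: z1)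
  show "AA 0 u = 0" unfolding AA_def using inv1[OF a0(1) zo(1) b(1)] a0(2) z2[OF zo(1)] z2[OF b(1)] z2[OF zo(2)] by simp
  show "AA u 1 = u" unfolding AA_def using inv2[OF b1(1) zo(2) a(1)] b1(2) one a by simp
  show "AA 1 u = u" unfolding AA_def using inv1[OF a1(1) zo(2) b(1)] a1(2) one b by simp
next
  fix u1 u2 v1 v2 :: real assume r: "u1 \<in> {0..1}" "u2 \<in> {0..1}" "v1 \<in> {0..1}" "v2 \<in> {0..1}" "u1 \<le> u2" "v1 \<le> v2"
  show "0 \<le> AA u2 v2 - AA u1 v2 - AA u2 v1 + AA u1 v1"
  proof (cases "u1 = u2 \<or> v1 = v2")
    case True then show ?thesis by auto
  next
    case False
    then have lt: "u1 < u2" "v1 < v2" using r by auto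
    have x: "q1 u1 \<le> q1 u2"
    proof (rule ccontr)
      assume "\<not> q1 u1 \<le> q1 u2"
      then have "H (q1 u2) 1 \<le> H (q1 u1) 1" using q1[OF r(1)] q1[OF r(2)] by (intro mono1) auto
      then show False using q1[OF r(1)] q1[OF r(2)] lt by auto
    qed
    have y: "q2 v1 \<le> q2 v2"
    proof (rule ccontr)
      assume "\<not> q2 v1 \<le> q2 v2"
      then have "H 1 (q2 v2) \<le> H 1 (q2 v1)" using q2[OF r(3)] q2[OF r(4)] by (intro mono2) auto
      then show False using q2[OF r(3)] q2[OF r(4)] lt by auto
    qed
    show ?thesis unfolding AA_def
      using rect[OF _ _ _ _ x y] q1[OF r(1)] q1[OF r(2)] q2[OF r(3)] q2[OF r(4)] by auto
  qed
qed

lemma exists_copula: "\<exists>A. copula2 A \<and> (\<forall>x\<in>{0..1}. \<forall>y\<in>{0..1}. H x y = A (H x 1) (H 1 y))"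
  using AA_copula AA_rep by blast

definition "Q01 = (\<rat> \<inter> {0..1::real}) \<times> (\<rat> \<inter> {0..1::real})"
definition "TT s1 s2 = (\<lambda>(x,y). H x y + \<bar>H x 1 - s1\<bar> + \<bar>H 1 y - s2\<bar>)"

lemma approx_rat1: assumes s: "s\<in>{0..1}" and e: "0 < e" shows "\<exists>x\<in>\<rat> \<inter> {0..1}. \<bar>H x 1 - s\<bar> < e"
proof -
  obtain x0 where x0: "x0\<in>{0..1}" "H x0 1 = s" using surj1[OF s] by blast
  obtain d where d: "0 < d" "\<And>x. x\<in>{0..1} \<Longrightarrow> dist x x0 < d \<Longrightarrow> dist (H x 1) (H x0 1) < e"
    using cont1 x0(1) e unfolding continuous_on_iff by metis
  have "max 0 (x0 - d) < min 1 (x0 + d)" using d(1) x0(1) by auto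
  then obtain r where r: "r \<in> \<rat>" "max 0 (x0 - d) < r" "r < min 1 (x0 + d)" using Rats_dense_in_real by blast
  then have "r \<in> {0..1}" "dist r x0 < d" by (auto simp: dist_real_def)
  then show ?thesis using d(2)[of r] r(1) x0(2) by (auto simp: dist_real_def)
qed

lemma approx_rat2: assumes s: "s\<in>{0..1}" and e: "0 < e" shows "\<exists>y\<in>\<rat> \<inter> {0..1}. \<bar>H 1 y - s\<bar> < e"
proof -
  obtain x0 where x0: "x0\<in>{0..1}" "H 1 x0 = s" using surj2[OF s] by blast
  obtain d where d: "0 < d" "\<And>x. x\<in>{0..1} \<Longrightarrow> dist x x0 < d \<Longrightarrow> dist (H 1 x) (H 1 x0) < e"
    using cont2 x0(1) e unfolding continuous_on_iff by metis
  have "max 0 (x0 - d) < min 1 (x0 + d)" using d(1) x0(1) by auto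
  then obtain r where r: "r \<in> \<rat>" "max 0 (x0 - d) < r" "r < min 1 (x0 + d)" using Rats_dense_in_real by blast
  then have "r \<in> {0..1}" "dist r x0 < d" by (auto simp: dist_real_def)
  then show ?thesis using d(2)[of r] r(1) x0(2) by (auto simp: dist_real_def)
qed

lemma INF_rep: assumes B: "copula2 B" and rep: "\<forall>x\<in>{0..1}. \<forall>y\<in>{0..1}. H x y = B (H x 1) (H 1 y)"
  and s: "s1\<in>{0..1}" "s2\<in>{0..1}"
  shows "B s1 s2 = (INF p\<in>Q01. TT s1 s2 p)"
proof -
  have low: "B s1 s2 \<le> TT s1 s2 p" if pq: "p \<in> Q01" for p
  proof -
    obtain x y where p: "p = (x,y)" "x\<in>{0..1}" "y\<in>{0..1}" using pq unfolding Q01_def by (cases p) auto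
    have l: "\<bar>B (H x 1) (H 1 y) - B s1 s2\<bar> \<le> \<bar>H x 1 - s1\<bar> + \<bar>H 1 y - s2\<bar>"
      using c2_lip[OF B F1_range[OF p(2)] F2_range[OF p(3)] s] .
    have e: "H x y = B (H x 1) (H 1 y)" using rep p(2,3) by blast
    show ?thesis unfolding TT_def p(1) using l e by (simp add: abs_le_iff)
  qed
  have "(0::real, 0::real) \<in> Q01" by (simp add: Q01_def)
  then have ne: "Q01 \<noteq> {}" by (metis empty_iff)
  have bdd: "bdd_below (TT s1 s2 ` Q01)" by (rule bdd_belowI2[where m = "B s1 s2"]) (rule low)
  show ?thesis
  proof (rule antisym)
    show "B s1 s2 \<le> (INF p\<in>Q01. TT s1 s2 p)" by (rule cINF_greatest[OF ne]) (rule low)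
    show "(INF p\<in>Q01. TT s1 s2 p) \<le> B s1 s2"
    proof (rule field_le_epsilon)
      fix e :: real assume e: "0 < e"
      obtain x where x: "x\<in>\<rat> \<inter> {0..1}" "\<bar>H x 1 - s1\<bar> < e/4" using approx_rat1[OF s(1), of "e/4"] e by auto
      obtain y where y: "y\<in>\<rat> \<inter> {0..1}" "\<bar>H 1 y - s2\<bar> < e/4" using approx_rat2[OF s(2), of "e/4"] e by auto
      have p: "(x,y) \<in> Q01" using x y by (auto simp: Q01_def)
      have xy: "x \<in> {0..1}" "y \<in> {0..1}" using x y by auto
      have l: "\<bar>B (H x 1) (H 1 y) - B s1 s2\<bar> \<le> \<bar>H x 1 - s1\<bar> + \<bar>H 1 y - s2\<bar>"
        using c2_lip[OF B F1_range[OF xy(1)] F2_range[OF xy(2)] s] .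
      have ee: "H x y = B (H x 1) (H 1 y)" using rep xy by blast
      have "TT s1 s2 (x,y) \<le> B s1 s2 + e" unfolding TT_def using l ee x(2) y(2) by (simp add: abs_le_iff)
      moreover have "(INF p\<in>Q01. TT s1 s2 p) \<le> TT s1 s2 (x,y)" by (rule cINF_lower[OF bdd p])
      ultimately show "(INF p\<in>Q01. TT s1 s2 p) \<le> B s1 s2 + e" by linarith
    qed
  qed
qed

end

lemma box_borel[measurable]: "{0..x::real}\<times>{0..y::real} \<in> sets borel"
  by (intro borel_closed closed_Times) auto

lemma rect_meas:
  fixes M :: "(real\<times>real) measure"
  assumes fm: "finite_measure M" and sM: "sets M = sets borel"
    and le: "0 \<le> x" "x \<le> x'" "0 \<le> y" "y \<le> y'"
  shows "0 \<le> measure M ({0..x'}\<times>{0..y'}) - measure M ({0..x}\<times>{0..y'}) - measure M ({0..x'}\<times>{0..y}) + measure M ({0..x}\<times>{0..y})"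
proof -
  interpret finite_measure M by (rule fm)
  define D where "D = {0..x'} - {0..x}"
  have Db: "D \<times> B \<in> sets M" if "B \<in> sets (borel::real measure)" for B
  proof -
    have "D \<times> B \<in> sets (borel \<Otimes>\<^sub>M borel)" unfolding D_def using that by (intro pair_measureI) auto
    then show ?thesis unfolding sM borel_prod .
  qed
  have bx: "{0..a}\<times>{0..b} \<in> sets M" for a b :: real using box_borel sM by simp
  have e1: "measure M ({0..x'}\<times>{0..b}) - measure M ({0..x}\<times>{0..b}) = measure M (D \<times> {0..b})" for b :: real
  proof -
    have "{0..x'}\<times>{0..b} - {0..x}\<times>{0..b} = D \<times> {0..b}" unfolding D_def by auto
    moreover have "{0..x}\<times>{0..b} \<subseteq> {0..x'}\<times>{0..b}" using le by auto
    moreover have "measure M ({0..x'}\<times>{0..b} - {0..x}\<times>{0..b}) = measure M ({0..x'}\<times>{0..b}) - measure M ({0..x}\<times>{0..b})"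
      by (rule finite_measure_Diff[OF bx bx]) (use le in auto)
    ultimately show ?thesis by simp
  qed
  have "measure M (D \<times> {0..y}) \<le> measure M (D \<times> {0..y'})"
    using le by (intro finite_measure_mono Db) auto
  then show ?thesis using e1[of y] e1[of y'] by linarith
qed

definition "good K t \<longleftrightarrow> t \<in> {0..1} \<and> continuous_on {0..1} (F13 K t) \<and> continuous_on {0..1} (F23 K t)
   \<and> F13 K t 0 = 0 \<and> F23 K t 0 = 0"
definition "HH K t x y = measure (K t) ({0..x}\<times>{0..y})"
definition "Qr = (\<rat> \<inter> {0..1::real}) \<times> (\<rat> \<inter> {0..1::real})"
definition "gfun K s1 s2 t = (INF p\<in>Qr. (\<lambda>(x,y). HH K t x y + \<bar>HH K t x 1 - s1\<bar> + \<bar>HH K t 1 y - s2\<bar>) p)"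

context
  fixes C :: "real\<Rightarrow>real\<Rightarrow>real\<Rightarrow>real" and K :: "real \<Rightarrow> (real\<times>real) measure"
  assumes c: "copula3 C" and ck: "cond_kernel C K" and cmg: "cont_margins K"
begin

lemma Kmeas: "K \<in> measurable (restrict_space borel {0..1}) (subprob_algebra borel)"
  using ck unfolding cond_kernel_def by blast
lemma Kprob: "t \<in> {0..1} \<Longrightarrow> prob_space (K t)"
  using ck unfolding cond_kernel_def by blast
lemma Kone: "t \<in> {0..1} \<Longrightarrow> emeasure (K t) ({0..1}\<times>{0..1}) = 1"
  using ck unfolding cond_kernel_def by blast
lemma Crep: "u1 \<in> {0..1} \<Longrightarrow> u2 \<in> {0..1} \<Longrightarrow> v \<in> {0..1} \<Longrightarrow>
   C u1 u2 v = (LINT t:{0..v}|lborel. measure (K t) ({0..u1}\<times>{0..u2}))"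
  using ck unfolding cond_kernel_def by blast
lemma Ksets: "t \<in> {0..1} \<Longrightarrow> sets (K t) = sets borel"
  using measurable_space[OF Kmeas, of t] by (simp add: space_subprob_algebra)
lemma Kfin: "t \<in> {0..1} \<Longrightarrow> finite_measure (K t)"
  using Kprob by (simp add: prob_space_def)
lemma Kle1: "t \<in> {0..1} \<Longrightarrow> 0 \<le> measure (K t) S \<and> measure (K t) S \<le> 1"
  using prob_space.prob_le_1[OF Kprob] by auto

lemma mK: "S \<in> sets borel \<Longrightarrow> (\<lambda>t. measure (K t) S) \<in> borel_measurable (restrict_space borel {0..1})"
  unfolding measure_def
  by (intro borel_measurable_enn2real measurable_compose[OF Kmeas measurable_emeasure_subprob_algebra])

lemma restr_ind: fixes f :: "real \<Rightarrow> real"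
  assumes "f \<in> borel_measurable (restrict_space borel {0..1})"
  shows "(\<lambda>t. indicator {0..1} t * f t) \<in> borel_measurable borel"
  using assms borel_measurable_restrict_space_iff[of "{0..1::real}" borel f] by simp

lemma iK: "S \<in> sets borel \<Longrightarrow> (\<lambda>t. indicator {0..1} t * measure (K t) S) \<in> borel_measurable borel"
  by (intro restr_ind mK)

lemma zero_margin:
  assumes S: "S \<in> sets borel" and z: "(LINT t:{0..1}|lborel. measure (K t) S) = 0"
  shows "AE t in lborel. t \<in> {0..1} \<longrightarrow> measure (K t) S = 0"
proof -
  have I: "integrable lborel (\<lambda>t. indicator {0..1} t * measure (K t) S)"
  proof (rule integrableI_bounded_set[where A="{0..1}" and B=1])
    show "(\<lambda>t. indicator {0..1} t * measure (K t) S) \<in> borel_measurable lborel" using iK[OF S] by simp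
    show "AE x in lborel. x \<in> {0..1} \<longrightarrow> norm (indicator {0..1} x * measure (K x) S) \<le> 1"
      using Kle1 by (auto simp: indicator_def)
  qed (auto simp: emeasure_lborel_Icc_eq)
  have "integral\<^sup>L lborel (\<lambda>t. indicator {0..1} t * measure (K t) S) = 0"
    using z by (simp add: set_lebesgue_integral_def)
  then have "AE t in lborel. indicator {0..1} t * measure (K t) S = 0"
    using integral_nonneg_eq_0_iff_AE[OF I] Kle1 by (auto simp: indicator_def)
  then show ?thesis by eventually_elim (auto simp: indicator_def)
qed


lemma AE_good: "AE t in lborel. t \<in> {0..1} \<longrightarrow> good K t"
proof -
  have z1: "AE t in lborel. t \<in> {0..1} \<longrightarrow> F13 K t 0 = 0"
    unfolding F13_def using Crep[of 0 1 1] c3_g1[OF c, of 1 1] box_borel[of 0 1] by (intro zero_margin) auto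
  have z2: "AE t in lborel. t \<in> {0..1} \<longrightarrow> F23 K t 0 = 0"
    unfolding F23_def using Crep[of 1 0 1] c3_g2[OF c, of 1 1] box_borel[of 1 0] by (intro zero_margin) auto
  show ?thesis using cmg z1 z2 unfolding cont_margins_def good_def by eventually_elim auto
qed


lemma good_sk: assumes g: "good K t" shows "sk (HH K t)"
proof -
  have t: "t \<in> {0..1}" using g by (simp add: good_def)
  interpret finite_measure "K t" by (rule Kfin[OF t])
  have bx: "{0..a}\<times>{0..b} \<in> sets (K t)" for a b :: real using box_borel Ksets[OF t] by simp
  show ?thesis
  proof
    fix x x' y y' :: real assume "x\<in>{0..1}" "x'\<in>{0..1}" "y\<in>{0..1}" "y'\<in>{0..1}" "x \<le> x'" "y \<le> y'"
    then show "0 \<le> HH K t x' y' - HH K t x y' - HH K t x' y + HH K t x y"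
      unfolding HH_def by (intro rect_meas Kfin[OF t] Ksets[OF t]) auto
  next
    fix x :: real assume x: "x\<in>{0..1}"
    have "HH K t x 0 \<le> HH K t 1 0" unfolding HH_def using x by (intro finite_measure_mono bx) auto
    moreover have "HH K t 1 0 = 0" using g by (simp add: good_def F23_def HH_def)
    ultimately show "HH K t x 0 = 0" using measure_nonneg[of "K t" "{0..x}\<times>{0..0}"] unfolding HH_def by linarith
  next
    fix y :: real assume y: "y\<in>{0..1}"
    have "HH K t 0 y \<le> HH K t 0 1" unfolding HH_def using y by (intro finite_measure_mono bx) auto
    moreover have "HH K t 0 1 = 0" using g by (simp add: good_def F13_def HH_def)
    ultimately show "HH K t 0 y = 0" using measure_nonneg[of "K t" "{0..0}\<times>{0..y}"] unfolding HH_def by linarith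
  next
    show "HH K t 1 1 = 1" using Kone[OF t] by (simp add: HH_def measure_def)
  next
    show "continuous_on {0..1} (\<lambda>x. HH K t x 1)" using g by (simp add: good_def F13_def HH_def)
    show "continuous_on {0..1} (\<lambda>y. HH K t 1 y)" using g by (simp add: good_def F23_def HH_def)
  qed
qed

lemma good_cc: assumes g: "good K t"
  shows "copula2 (cond_copula K t) \<and> (\<forall>x\<in>{0..1}. \<forall>y\<in>{0..1}. HH K t x y = cond_copula K t (HH K t x 1) (HH K t 1 y))"
proof -
  interpret sk "HH K t" by (rule good_sk[OF g])
  have "\<exists>A. copula2 A \<and> (\<forall>u1\<in>{0..1}. \<forall>u2\<in>{0..1}. measure (K t) ({0..u1} \<times> {0..u2}) = A (F13 K t u1) (F23 K t u2))"
    using exists_copula unfolding HH_def F13_def F23_def .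
  from someI_ex[OF this] have "copula2 (cond_copula K t) \<and> (\<forall>u1\<in>{0..1}. \<forall>u2\<in>{0..1}.
      measure (K t) ({0..u1} \<times> {0..u2}) = cond_copula K t (F13 K t u1) (F23 K t u2))"
    unfolding cond_copula_def .
  then show ?thesis unfolding HH_def F13_def F23_def .
qed


lemma gfun_eq: assumes g: "good K t" and s: "s1 \<in> {0..1}" "s2 \<in> {0..1}"
  shows "cond_copula K t s1 s2 = gfun K s1 s2 t"
proof -
  interpret sk "HH K t" by (rule good_sk[OF g])
  note cc = good_cc[OF g, THEN conjunct1] good_cc[OF g, THEN conjunct2]
  have "cond_copula K t s1 s2 = (INF p\<in>Q01. TT s1 s2 p)" by (rule INF_rep[OF cc s])
  also have "\<dots> = gfun K s1 s2 t" unfolding TT_def Q01_def gfun_def Qr_def ..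
  finally show ?thesis .
qed

lemma gfun_meas: "gfun K s1 s2 \<in> borel_measurable (restrict_space borel {0..1})"
  unfolding gfun_def
proof (rule borel_measurable_cINF_real)
  show "countable Qr" unfolding Qr_def by (intro countable_SIGMA countable_Int1 countable_rat)
  fix p :: "real \<times> real"
  obtain x y where p: "p = (x,y)" by (cases p)
  show "(\<lambda>t. case p of (x, y) \<Rightarrow> HH K t x y + \<bar>HH K t x 1 - s1\<bar> + \<bar>HH K t 1 y - s2\<bar>) \<in> borel_measurable (restrict_space borel {0..1})"
    unfolding p HH_def using mK[OF box_borel] by simp
qed

end

lemma leb_int: "(f :: real \<Rightarrow> real) \<in> borel_measurable borel \<Longrightarrow> integral\<^sup>L lebesgue f = integral\<^sup>L lborel f"
  by (rule integral_completion) simp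
lemma leb_integrable: "(f :: real \<Rightarrow> real) \<in> borel_measurable borel \<Longrightarrow> integrable lebesgue f \<longleftrightarrow> integrable lborel f"
  by (rule integrable_completion) simp

lemma int_ind_const: "integral\<^sup>L lebesgue (\<lambda>t. indicator {0..v} t * (u::real)) = (if 0 \<le> v then v * u else 0)"
  by (subst leb_int) auto

lemma integrable_ind_leb: "integrable lebesgue (indicator {0..v::real} :: real \<Rightarrow> real)"
  by (subst leb_integrable) (auto simp: emeasure_lborel_Icc_eq)

context
  fixes C :: "real\<Rightarrow>real\<Rightarrow>real\<Rightarrow>real" and K :: "real \<Rightarrow> (real\<times>real) measure"
  assumes c: "copula3 C" and ck: "cond_kernel C K" and cmg: "cont_margins K"
begin

lemma good_leb: "AE t in lebesgue. t \<in> {0..1} \<longrightarrow> good K t"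
  by (rule AE_completion[OF AE_good[OF c ck cmg]])

lemma good01: "good K t \<Longrightarrow> t \<in> {0..1}" by (simp add: good_def)

lemma cc_meas: assumes s: "s1 \<in> {0..1}" "s2 \<in> {0..1}"
  shows "(\<lambda>t. indicator {0..1} t * cond_copula K t s1 s2) \<in> borel_measurable lebesgue"
proof (rule borel_measurable_AE)
  have "(\<lambda>t. indicator {0..1} t * gfun K s1 s2 t) \<in> borel_measurable borel"
    by (rule restr_ind[OF c ck cmg gfun_meas[OF c ck cmg]])
  then show "(\<lambda>t. indicator {0..1} t * gfun K s1 s2 t) \<in> borel_measurable lebesgue"
    by (intro measurable_completion) simp
  show "AE x in lebesgue. indicator {0..1} x * gfun K s1 s2 x = indicator {0..1} x * cond_copula K x s1 s2"
    using good_leb by eventually_elim (auto simp: indicator_def gfun_eq[OF c ck cmg _ s])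
qed

lemma cc_good: "good K t \<Longrightarrow> copula2 (cond_copula K t)"
  using good_cc[OF c ck cmg] by blast

lemma cc_int: assumes s: "s1 \<in> {0..1}" "s2 \<in> {0..1}"
  shows "integrable lebesgue (\<lambda>t. indicator {0..1} t * cond_copula K t s1 s2)"
proof (rule integrableI_bounded_set[where A="{0..1}" and B=1])
  show "{0..1::real} \<in> sets lebesgue" by (intro sets_completionI_sets) simp
  show "emeasure lebesgue {0..1::real} < \<infinity>" by (simp add: emeasure_lborel_Icc_eq)
  show "(\<lambda>t. indicator {0..1} t * cond_copula K t s1 s2) \<in> borel_measurable lebesgue" by (rule cc_meas[OF s])
  show "AE x in lebesgue. x \<in> {0..1} \<longrightarrow> norm (indicator {0..1} x * cond_copula K x s1 s2) \<le> 1"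
    using good_leb
  proof eventually_elim
    case (elim t)
    show ?case
    proof
      assume t: "t \<in> {0..1}"
      then show "norm (indicator {0..1} t * cond_copula K t s1 s2) \<le> 1"
        using c2_range[OF cc_good[OF elim[rule_format, OF t]] s] by auto
    qed
  qed
  show "AE x in lebesgue. x \<notin> {0..1} \<longrightarrow> indicator {0..1} x * cond_copula K x s1 s2 = 0"
    by simp
qed

lemma PC: "partial_copula K s1 s2 = integral\<^sup>L lebesgue (\<lambda>t. indicator {0..1} t * cond_copula K t s1 s2)"
  unfolding partial_copula_def set_lebesgue_integral_def by simp

lemma PC_const: assumes s: "s1 \<in> {0..1}" "s2 \<in> {0..1}" and r: "\<And>t. good K t \<Longrightarrow> cond_copula K t s1 s2 = u"
  shows "partial_copula K s1 s2 = u"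
proof -
  have "partial_copula K s1 s2 = integral\<^sup>L lebesgue (\<lambda>t::real. indicator {0..1} t * u)"
    unfolding PC
  proof (rule Bochner_Integration.integral_cong_AE)
    show "(\<lambda>t::real. indicator {0..1} t * u) \<in> borel_measurable lebesgue" by (rule measurable_completion) measurable
    show "AE x in lebesgue. indicator {0..1} x * cond_copula K x s1 s2 = indicator {0..1} x * u"
      using good_leb by eventually_elim (auto simp: indicator_def r)
  qed (rule cc_meas[OF s])
  then show ?thesis by (simp add: int_ind_const)
qed

lemma P_copula2: "copula2 (partial_copula K)"
  unfolding copula2_def
proof (intro conjI ballI impI)
  fix u :: real assume u: "u \<in> {0..1}"
  have z: "(0::real) \<in> {0..1}" "(1::real) \<in> {0..1}" by auto
  show "partial_copula K u 0 = 0" by (rule PC_const[OF u z(1)]) (use c2_b[OF cc_good u] in auto)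
  show "partial_copula K 0 u = 0" by (rule PC_const[OF z(1) u]) (use c2_b[OF cc_good u] in auto)
  show "partial_copula K u 1 = u" by (rule PC_const[OF u z(2)]) (use c2_b[OF cc_good u] in auto)
  show "partial_copula K 1 u = u" by (rule PC_const[OF z(2) u]) (use c2_b[OF cc_good u] in auto)
next
  fix u1 u2 v1 v2 :: real
  assume r: "u1 \<in> {0..1}" "u2 \<in> {0..1}" "v1 \<in> {0..1}" "v2 \<in> {0..1}" "u1 \<le> u2" "v1 \<le> v2"
  note I = cc_int[OF r(1) r(3)] cc_int[OF r(1) r(4)] cc_int[OF r(2) r(3)] cc_int[OF r(2) r(4)]
  have "partial_copula K u2 v2 - partial_copula K u1 v2 - partial_copula K u2 v1 + partial_copula K u1 v1
     = integral\<^sup>L lebesgue (\<lambda>t. indicator {0..1} t * cond_copula K t u2 v2 - indicator {0..1} t * cond_copula K t u1 v2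
         - indicator {0..1} t * cond_copula K t u2 v1 + indicator {0..1} t * cond_copula K t u1 v1)"
    unfolding PC by (simp add: I)
  also have "\<dots> \<ge> 0"
  proof (rule Bochner_Integration.integral_nonneg_AE)
    show "AE x in lebesgue. 0 \<le> indicator {0..1} x * cond_copula K x u2 v2 - indicator {0..1} x * cond_copula K x u1 v2
         - indicator {0..1} x * cond_copula K x u2 v1 + indicator {0..1} x * cond_copula K x u1 v1"
      using good_leb
    proof eventually_elim
      case (elim t)
      show ?case
      proof (cases "t \<in> {0..1}")
        case True
        then show ?thesis using c2_inc[OF cc_good[OF elim[rule_format, OF True]] r] True by simp
      qed simp
    qed
  qed
  finally show "0 \<le> partial_copula K u2 v2 - partial_copula K u1 v2 - partial_copula K u2 v1 + partial_copula K u1 v1" .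
qed

lemma pvc_bound: assumes r: "u1 \<in> {0..1}" "u2 \<in> {0..1}" "v \<in> {0..1}"
  shows "\<bar>pvc K u1 u2 v\<bar> \<le> 1"
proof -
  define f where "f t = indicator {0..v} t * partial_copula K (F13 K t u1) (F23 K t u2)" for t
  have pv: "pvc K u1 u2 v = integral\<^sup>L lebesgue f" unfolding pvc_def f_def set_lebesgue_integral_def by simp
  have fb: "\<bar>f t\<bar> \<le> indicator {0..v} t" for t
  proof (cases "t \<in> {0..v}")
    case True
    then have t: "t \<in> {0..1}" using r by auto
    have "F13 K t u1 \<in> {0..1}" "F23 K t u2 \<in> {0..1}" using Kle1[OF c ck cmg t] by (auto simp: F13_def F23_def)
    then show ?thesis using c2_range[OF P_copula2] True by (auto simp: f_def)
  qed (simp add: f_def)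
  have gi: "integrable lebesgue (indicator {0..v} :: real \<Rightarrow> real)" by (rule integrable_ind_leb)
  have gv: "integral\<^sup>L lebesgue (indicator {0..v} :: real \<Rightarrow> real) = v"
    using r int_ind_const[of v 1] by simp
  have 1: "integral\<^sup>L lebesgue f \<le> integral\<^sup>L lebesgue (indicator {0..v} :: real \<Rightarrow> real)"
    using fb by (intro integral_mono'[OF gi]) (auto simp: abs_le_iff)
  have 2: "integral\<^sup>L lebesgue (\<lambda>t. - f t) \<le> integral\<^sup>L lebesgue (indicator {0..v} :: real \<Rightarrow> real)"
    using fb by (intro integral_mono'[OF gi]) (auto simp: abs_le_iff)
  show ?thesis using 1 2 gv r unfolding pv by (simp add: abs_le_iff)
qed

end

theorem theorem5p1:
  fixes C :: "real \<Rightarrow> real \<Rightarrow> real \<Rightarrow> real"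
    and K :: "real \<Rightarrow> (real \<times> real) measure"
  assumes "copula3 C"
    and "cond_kernel C K"
    and "cont_margins K"
    and "\<not> simplified C"
  shows "\<exists>D. simplified D \<and> d_inf C D < d_inf C (pvc K)"
proof -
  note c = assms(1) and ck = assms(2) and cmg = assms(3)
  have P2: "copula2 (partial_copula K)" by (rule P_copula2[OF c ck cmg])
  define cube where "cube = {0..1::real} \<times> {0..1::real} \<times> {0..1::real}"
  define f where "f x = \<bar>C (fst x) (fst (snd x)) (snd (snd x)) - pvc K (fst x) (fst (snd x)) (snd (snd x))\<bar>" for x
  have ex: "\<exists>x\<in>cube. 0 < f x"
  proof (rule ccontr)
    assume "\<not> (\<exists>x\<in>cube. 0 < f x)"
    then have eq: "C u1 u2 v = pvc K u1 u2 v" if "u1\<in>{0..1}" "u2\<in>{0..1}" "v\<in>{0..1}" for u1 u2 v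
      using that by (force simp: cube_def f_def)
    have "simplified C"
      unfolding simplified_def
    proof (intro conjI exI[of _ K] exI[of _ "partial_copula K"] c ck cmg P2 ballI)
      fix u1 u2 v :: real assume "u1\<in>{0..1}" "u2\<in>{0..1}" "v\<in>{0..1}"
      then show "C u1 u2 v = (LINT t:{0..v}|lebesgue. partial_copula K (F13 K t u1) (F23 K t u2))"
        using eq unfolding pvc_def by blast
    qed
    then show False using assms(4) by blast
  qed
  then obtain x0 where x0: "x0 \<in> cube" "0 < f x0" by blast
  have Cb: "\<bar>C x y z\<bar> \<le> 1" if "x\<in>{0..1}" "y\<in>{0..1}" "z\<in>{0..1}" for x y z
  proof -
    have "\<bar>C x y z - C 0 y z\<bar> \<le> \<bar>x - 0\<bar> + \<bar>y - y\<bar> + \<bar>z - z\<bar>"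
      using that by (intro c3_lip[OF c]) auto
    then show ?thesis using c3_g1[OF c that(2,3)] that by simp
  qed
  have fb: "f x \<le> 2" if xc: "x \<in> cube" for x
  proof -
    obtain a b d where x: "x = (a,b,d)" "a\<in>{0..1}" "b\<in>{0..1}" "d\<in>{0..1}" using xc unfolding cube_def by (cases x) auto
    show ?thesis using Cb[OF x(2-4)] pvc_bound[OF c ck cmg x(2-4)] unfolding f_def x(1) by simp
  qed
  have bdd: "bdd_above (f ` cube)" using fb by (intro bdd_aboveI2) auto
  have dpvc: "f x0 \<le> d_inf C (pvc K)"
    unfolding d_inf_def cube_def[symmetric] f_def[symmetric] by (rule cSUP_upper[OF x0(1) bdd])
  obtain n :: nat where n: "0 < n" "inverse (real n) < f x0 / 6"
    using ex_inverse_of_nat_less[of "f x0 / 6"] x0(2) by auto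
  have ne: "cube \<noteq> {}" unfolding cube_def by auto
  have "d_inf C (Dd C n) \<le> 6 / real n"
    unfolding d_inf_def cube_def[symmetric]
  proof (rule cSUP_least[OF ne])
    fix x assume "x \<in> cube"
    then obtain a b d where x: "x = (a,b,d)" "a\<in>{0..1}" "b\<in>{0..1}" "d\<in>{0..1}" unfolding cube_def by (cases x) auto
    show "\<bar>C (fst x) (fst (snd x)) (snd (snd x)) - Dd C n (fst x) (fst (snd x)) (snd (snd x))\<bar> \<le> 6 / real n"
      using Dd_close[OF c n(1) x(2-4)] unfolding x(1) by simp
  qed
  moreover have "6 / real n < f x0" using n by (simp add: field_simps)
  ultimately have "d_inf C (Dd C n) < d_inf C (pvc K)" using dpvc by linarith
  then show ?thesis using Dd_simplified[OF c n(1)] by blast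
qed

end
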